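(* For every integer $k\ge2$, the independent user partition multicast scheme is optimal for the $(k,2)$-GIC problem (defined in the context), i.e. $\beta_{IUPM}=\beta$, where $\beta$ is the optimal broadcast rate of that problem.
   Context: GIC problem: there are $m$ packets $x_1,\dots,x_m$, each a binary string of length $t$; for each $i\in[m]$ there is a nonempty set $U_i=\{u_i^1,\dots,u_i^{|U_i|}\}$ of users demanding $x_i$, $U=\bigcup_iU_i$; user $u_i^j$ knows the packets $x_{i'}$, $i'\in A_i^j\subseteq[m]\setminus\{i\}$. An index code of length $r$ for packet length $t$ is an encoder $\phi:(\{0,1\}^t)^m\to\{0,1\}^r$ with decoders $\psi_i^j$ recovering $x_i$ from $\phi(x_1,\dots,x_m)$ and $(x_{i'})_{i'\in A_i^j}$ for all packet values; $\beta=\inf_t\inf r/t$. IUPM rate: for a partition of $U$ into nonempty disjoint sets $W_1,\dots,W_h$ ($1\le h\le m$), let $Y_e=\{i:u_i^j\in W_e\text{ for some }j\}$, $c_e=\min\{|A_i^j\cap Y_e|:u_i^j\in W_e\}$, $b_e=|Y_e|-c_e$. Over a field $\mathbb F=GF(2^s)$ (packets viewed as vectors over $\mathbb F$, combinations componentwise), a valid coefficient choice gives, for each $e$, $b_e$ vectors $\alpha\in\mathbb F^m$ supported on $Y_e$ such that each user $u_i^j\in W_e$ can recover $x_i$ from the combinations $\sum_{i'}\alpha_{i'}x_{i'}$ and its side information. $\mathbf N$ is the matrix of all these vectors as rows; the IUPM rate of the partition is the minimum of $\operatorname{rank}\mathbf N$ over $s$ and valid choices, and $\beta_{IUPM}$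 is its minimum over all user partitions. The $(k,2)$-GIC problem: $m=k(k-1)/2$, $U_i=\{u_i^1,u_i^2\}$ for all $i$. For $l\in[k]$: $I_l^1=\{(l-1)k+a-\tfrac{l(l-1)}{2}: a=1,\dots,k-l\}$ ($l\ne k$), $I_k^1=\emptyset$; $I_l^2=\{(a-1)k+l-\tfrac{a(a+1)}{2}: a=1,\dots,l-1\}$ ($l\ne1$), $I_1^2=\emptyset$; $I_l=I_l^1\cup I_l^2$. User $u_i^j$ has $A_i^j=I_l\setminus\{i\}$ where $l$ is the index with $i\in I_l^j$. *)

theory Defs
  imports "HOL-Algebra.Ring" "HOL-Library.Disjoint_Sets" Complex_Main
begin

text \<open>A GIC problem is given by the number m of packets (indexed 1..m), the number
  nU i of users demanding packet i (users u_i^j, j = 1..nU i) and the side-information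
  sets A i j (subsets of {1..m} - {i}).\<close>

definition gic_users :: "nat \<Rightarrow> (nat \<Rightarrow> nat) \<Rightarrow> (nat \<times> nat) set" where
  "gic_users m nU = {(i, j). i \<in> {1..m} \<and> j \<in> {1..nU i}}"

text \<open>Packets of length t: x i b is bit b of packet i; canonical form (False outside range).\<close>
definition packet_space :: "nat \<Rightarrow> nat \<Rightarrow> (nat \<Rightarrow> nat \<Rightarrow> bool) set" where
  "packet_space m t = {x. \<forall>i b. (i \<notin> {1..m} \<or> t \<le> b) \<longrightarrow> \<not> x i b}"

definition side_info :: "nat set \<Rightarrow> (nat \<Rightarrow> nat \<Rightarrow> bool) \<Rightarrow> (nat \<Rightarrow> nat \<Rightarrow> bool)" where
  "side_info S x = (\<lambda>i b. if i \<in> S then x i b else False)"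

definition has_index_code ::
  "nat \<Rightarrow> (nat \<Rightarrow> nat) \<Rightarrow> (nat \<Rightarrow> nat \<Rightarrow> nat set) \<Rightarrow> nat \<Rightarrow> nat \<Rightarrow> bool" where
  "has_index_code m nU A t r \<longleftrightarrow>
     (\<exists>(\<phi> :: (nat \<Rightarrow> nat \<Rightarrow> bool) \<Rightarrow> nat \<Rightarrow> bool)
        (\<psi> :: nat \<Rightarrow> nat \<Rightarrow> (nat \<Rightarrow> bool) \<Rightarrow> (nat \<Rightarrow> nat \<Rightarrow> bool) \<Rightarrow> nat \<Rightarrow> bool).
        (\<forall>x \<in> packet_space m t. \<forall>b. r \<le> b \<longrightarrow> \<not> \<phi> x b) \<and>
        (\<forall>(i, j) \<in> gic_users m nU. \<forall>x \<in> packet_space m t. \<forall>b < t.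
            \<psi> i j (\<phi> x) (side_info (A i j) x) b = x i b))"

definition gic_beta :: "nat \<Rightarrow> (nat \<Rightarrow> nat) \<Rightarrow> (nat \<Rightarrow> nat \<Rightarrow> nat set) \<Rightarrow> real" where
  "gic_beta m nU A = Inf {real r / real t | r t. 0 < t \<and> has_index_code m nU A t r}"

definition part_Y :: "(nat \<times> nat) set \<Rightarrow> nat set" where
  "part_Y W = {i. \<exists>j. (i, j) \<in> W}"

definition part_c :: "(nat \<Rightarrow> nat \<Rightarrow> nat set) \<Rightarrow> (nat \<times> nat) set \<Rightarrow> nat" where
  "part_c A W = Min {card (A i j \<inter> part_Y W) | i j. (i, j) \<in> W}"

definition part_b :: "(nat \<Rightarrow> nat \<Rightarrow> nat set) \<Rightarrow> (nat \<times> nat) set \<Rightarrow> nat" where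
  "part_b A W = card (part_Y W) - part_c A W"

text \<open>Valid coefficient choice over the field R: for each group W of the partition P,
  vectors alpha W k (k < b_W), alpha W k i the coefficient of packet i, supported on Y_W,
  such that every user of W can recover its packet from the b_W combinations and its
  side information (packets are elements of the field; combinations act componentwise,
  so this is the per-component condition).\<close>
definition valid_choice ::
  "'c ring \<Rightarrow> nat \<Rightarrow> (nat \<Rightarrow> nat \<Rightarrow> nat set) \<Rightarrow> (nat \<times> nat) set set
     \<Rightarrow> ((nat \<times> nat) set \<Rightarrow> nat \<Rightarrow> nat \<Rightarrow> 'c) \<Rightarrow> bool" where
  "valid_choice R m A P \<alpha> \<longleftrightarrow>
     (\<forall>W \<in> P. \<forall>k < part_b A W. \<forall>i.
        \<alpha> W k i \<in> carrier R \<and> (i \<notin> part_Y W \<longrightarrow> \<alpha> W k i = \<zero>\<^bsub>R\<^esub>)) \<and>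
     (\<forall>W \<in> P. \<forall>(i, j) \<in> W. \<exists>\<psi> :: (nat \<Rightarrow> 'c) \<Rightarrow> (nat \<Rightarrow> 'c) \<Rightarrow> 'c.
        \<forall>x :: nat \<Rightarrow> 'c. (\<forall>i'. x i' \<in> carrier R) \<longrightarrow>
          \<psi> (\<lambda>k. if k < part_b A W
                   then finsum R (\<lambda>i'. \<alpha> W k i' \<otimes>\<^bsub>R\<^esub> x i') {1..m} else \<zero>\<^bsub>R\<^esub>)
            (\<lambda>i'. if i' \<in> A i j then x i' else \<zero>\<^bsub>R\<^esub>) = x i)"

definition choice_rows ::
  "(nat \<Rightarrow> nat \<Rightarrow> nat set) \<Rightarrow> (nat \<times> nat) set set
     \<Rightarrow> ((nat \<times> nat) set \<Rightarrow> nat \<Rightarrow> nat \<Rightarrow> 'c) \<Rightarrow> (nat \<Rightarrow> 'c) set" where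
  "choice_rows A P \<alpha> = {\<alpha> W k | W k. W \<in> P \<and> k < part_b A W}"

definition lin_indep_vecs :: "'c ring \<Rightarrow> nat \<Rightarrow> (nat \<Rightarrow> 'c) set \<Rightarrow> bool" where
  "lin_indep_vecs R m S \<longleftrightarrow> finite S \<and>
     (\<forall>c. (\<forall>v \<in> S. c v \<in> carrier R) \<longrightarrow>
          (\<forall>i \<in> {1..m}. finsum R (\<lambda>v. c v \<otimes>\<^bsub>R\<^esub> v i) S = \<zero>\<^bsub>R\<^esub>) \<longrightarrow>
          (\<forall>v \<in> S. c v = \<zero>\<^bsub>R\<^esub>))"

definition vec_rank :: "'c ring \<Rightarrow> nat \<Rightarrow> (nat \<Rightarrow> 'c) set \<Rightarrow> nat" where
  "vec_rank R m S = Max {card T | T. T \<subseteq> S \<and> lin_indep_vecs R m T}"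

text \<open>IUPM rate of a user partition: minimum of rank N over s and valid choices over
  GF(2^s) (any field with 2^s elements, s \<ge> 1, represented with carrier in nat).\<close>
definition iupm_rate ::
  "nat \<Rightarrow> (nat \<Rightarrow> nat \<Rightarrow> nat set) \<Rightarrow> (nat \<times> nat) set set \<Rightarrow> nat" where
  "iupm_rate m A P = Inf {vec_rank R m (choice_rows A P \<alpha>) | (R :: nat ring) s \<alpha>.
      field R \<and> 1 \<le> s \<and> card (carrier R) = 2 ^ s \<and> valid_choice R m A P \<alpha>}"

definition beta_iupm :: "nat \<Rightarrow> (nat \<Rightarrow> nat) \<Rightarrow> (nat \<Rightarrow> nat \<Rightarrow> nat set) \<Rightarrow> nat" where
  "beta_iupm m nU A = Inf {iupm_rate m A P | P.
      partition_on (gic_users m nU) P \<and> card P \<le> m}"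

definition k2_m :: "nat \<Rightarrow> nat" where
  "k2_m k = k * (k - 1) div 2"

definition k2_I1 :: "nat \<Rightarrow> nat \<Rightarrow> nat set" where
  "k2_I1 k l = (if l = k then {} else
     {(l - 1) * k + a - l * (l - 1) div 2 | a. 1 \<le> a \<and> a \<le> k - l})"

definition k2_I2 :: "nat \<Rightarrow> nat \<Rightarrow> nat set" where
  "k2_I2 k l = (if l = 1 then {} else
     {(a - 1) * k + l - a * (a + 1) div 2 | a. 1 \<le> a \<and> a \<le> l - 1})"

definition k2_Ij :: "nat \<Rightarrow> nat \<Rightarrow> nat \<Rightarrow> nat set" where
  "k2_Ij j k l = (if j = 1 then k2_I1 k l else k2_I2 k l)"

definition k2_I :: "nat \<Rightarrow> nat \<Rightarrow> nat set" where
  "k2_I k l = k2_I1 k l \<union> k2_I2 k l"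

definition k2_nU :: "nat \<Rightarrow> nat" where
  "k2_nU i = 2"

definition k2_A :: "nat \<Rightarrow> nat \<Rightarrow> nat \<Rightarrow> nat set" where
  "k2_A k i j = k2_I k (THE l. l \<in> {1..k} \<and> i \<in> k2_Ij j k l) - {i}"

end

theory Submission
  imports Defs
begin


definition idx :: "nat \<Rightarrow> nat \<Rightarrow> nat \<Rightarrow> nat" where
  "idx k a b = (a - 1) * k + b - a * (a + 1) div 2"

definition off :: "nat \<Rightarrow> nat \<Rightarrow> nat" where
  "off k a = idx k a a"

lemma tri2: "2 * (a * (a + 1) div 2) = a * ((a::nat) + 1)"
  by simp

lemma tri_le: "1 \<le> a \<Longrightarrow> a \<le> k \<Longrightarrow> a * (a + 1) div 2 \<le> (a - 1) * k + (a::nat)"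
proof -
  assume a: "1 \<le> a" "a \<le> k"
  have "(a - 1) * a \<le> (a - 1) * k" using a by simp
  moreover have "(a - 1) * a + a = a * a" using a by (cases a) auto
  moreover have "a * (a + 1) \<le> 2 * (a * a)" using a by (simp add: algebra_simps)
  ultimately show ?thesis using tri2[of a] by linarith
qed

lemma idx_off: "1 \<le> a \<Longrightarrow> a \<le> b \<Longrightarrow> a \<le> k \<Longrightarrow> idx k a b = off k a + (b - a)"
  unfolding off_def idx_def using tri_le[of a k] by simp

lemma off_1: "off k 1 = 0"
  unfolding off_def idx_def by simp

lemma off_Suc: "1 \<le> a \<Longrightarrow> a < k \<Longrightarrow> off k (Suc a) = off k a + (k - a)"
proof -
  assume a: "1 \<le> a" "a < k"
  have t: "Suc a * (Suc a + 1) div 2 = a * (a + 1) div 2 + Suc a"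
  proof -
    have "Suc a * (Suc a + 1) = a * (a + 1) + 2 * Suc a" by (simp add: algebra_simps)
    then show ?thesis by simp
  qed
  have k: "(Suc a - 1) * k = (a - 1) * k + k" using a by (cases a) auto
  show ?thesis unfolding off_def idx_def using tri_le[of a k] a t k by simp
qed

lemma off_k: "off k k = k * (k - 1) div 2"
proof -
  define T where "T = k * (k + 1) div 2"
  define D where "D = k * (k - 1) div 2"
  define Q where "Q = k * k"
  have 1: "off k k = Q - T" unfolding off_def idx_def T_def Q_def
    by (cases k) (auto simp: algebra_simps)
  have 2: "2 * T = Q + k" unfolding T_def Q_def by (simp add: algebra_simps)
  have 3: "2 * D = Q - k" unfolding D_def Q_def by (cases k) (auto simp: algebra_simps)
  have 4: "k \<le> Q" unfolding Q_def by (cases k) auto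
  show ?thesis using 1 2 3 4 unfolding D_def[symmetric] by linarith
qed

lemma off_mono: "1 \<le> a \<Longrightarrow> a \<le> a' \<Longrightarrow> a' \<le> k \<Longrightarrow> off k a \<le> off k a'"
proof (induction a')
  case 0 then show ?case by simp
next
  case (Suc n)
  show ?case
  proof (cases "a \<le> n")
    case True
    then show ?thesis using Suc off_Suc[of n k] by simp
  next
    case False
    then have "a = Suc n" using Suc by simp
    then show ?thesis by simp
  qed
qed

definition Pairs :: "nat \<Rightarrow> (nat \<times> nat) set" where
  "Pairs k = {(a, b). 1 \<le> a \<and> a < b \<and> b \<le> k}"

lemma idx_bounds: "1 \<le> a \<Longrightarrow> a < b \<Longrightarrow> b \<le> k \<Longrightarrow> off k a < idx k a b \<and> idx k a b \<le> off k (Suc a)"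
proof -
  assume A: "1 \<le> a" "a < b" "b \<le> k"
  have "idx k a b = off k a + (b - a)" using idx_off[of a b k] A by simp
  moreover have "off k (Suc a) = off k a + (k - a)" using off_Suc[of a k] A by simp
  ultimately show ?thesis using A by arith
qed

lemma idx_inj: assumes "(a, b) \<in> Pairs k" "(a', b') \<in> Pairs k" "idx k a b = idx k a' b'"
  shows "a = a' \<and> b = b'"
proof -
  have A: "1 \<le> a" "a < b" "b \<le> k" "1 \<le> a'" "a' < b'" "b' \<le> k" using assms by (auto simp: Pairs_def)
  have "a = a'"
  proof (rule ccontr)
    assume "a \<noteq> a'"
    then consider "a < a'" | "a' < a" by linarith
    then show False
    proof cases
      case 1
      have "idx k a b \<le> off k (Suc a)" using idx_bounds[of a b k] A by simp
      also have "\<dots> \<le> off k a'" using off_mono[of "Suc a" a' k] 1 A by simp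
      also have "\<dots> < idx k a' b'" using idx_bounds[of a' b' k] A by simp
      finally show False using assms(3) by simp
    next
      case 2
      have "idx k a' b' \<le> off k (Suc a')" using idx_bounds[of a' b' k] A by simp
      also have "\<dots> \<le> off k a" using off_mono[of "Suc a'" a k] 2 A by simp
      also have "\<dots> < idx k a b" using idx_bounds[of a b k] A by simp
      finally show False using assms(3) by simp
    qed
  qed
  then show ?thesis using assms(3) idx_off[of a b k] idx_off[of a' b' k] A by simp
qed

lemma idx_range: assumes "(a, b) \<in> Pairs k" shows "idx k a b \<in> {1..k2_m k}"
proof -
  have A: "1 \<le> a" "a < b" "b \<le> k" using assms by (auto simp: Pairs_def)
  have "idx k a b \<le> off k (Suc a)" using idx_bounds[of a b k] A by simp
  also have "\<dots> \<le> off k k" using off_mono[of "Suc a" k k] A by simp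
  finally show ?thesis using idx_bounds[of a b k] A off_k[of k] by (simp add: k2_m_def)
qed

lemma idx_surj: assumes "n \<in> {1..k2_m k}" shows "\<exists>(a, b) \<in> Pairs k. n = idx k a b"
proof -
  have n: "1 \<le> n" "n \<le> off k k" using assms off_k[of k] by (auto simp: k2_m_def)
  define S where "S = {a \<in> {1..k}. off k a < n}"
  have k1: "1 \<le> k" using n off_k[of k] by (cases k) auto
  have "1 \<in> S" using n k1 off_1[of k] by (simp add: S_def)
  have fS: "finite S" by (simp add: S_def)
  define a where "a = Max S"
  have aS: "a \<in> S" using \<open>1 \<in> S\<close> fS a_def Max_in by blast
  have a1: "1 \<le> a" "a \<le> k" "off k a < n" using aS by (auto simp: S_def)
  have ak: "a < k" using a1 n by (metis le_neq_implies_less not_le)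
  have "\<not> off k (Suc a) < n"
  proof
    assume "off k (Suc a) < n"
    then have "Suc a \<in> S" using ak by (simp add: S_def)
    then show False using Max_ge[OF fS, of "Suc a"] a_def by simp
  qed
  then have n2: "n \<le> off k a + (k - a)" using off_Suc[of a k] a1 ak by simp
  define b where "b = a + (n - off k a)"
  have "(a, b) \<in> Pairs k" using a1 n2 by (auto simp: Pairs_def b_def)
  moreover have "n = idx k a b" using idx_off[of a b k] a1 n2 by (simp add: b_def)
  ultimately show ?thesis by blast
qed



lemma tri_m: "(l::nat) * (l - 1) div 2 + l = l * (l + 1) div 2"
proof -
  have a: "2 * (l * (l - 1) div 2) = l * (l - 1)" by (cases l) simp_all
  have b: "2 * (l * (l + 1) div 2) = l * (l + 1)" by simp
  have c: "l * (l + 1) = l * (l - 1) + 2 * l" by (cases l) (auto simp: algebra_simps)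
  show ?thesis using a b c by linarith
qed

lemma I1_eq: assumes "1 \<le> l" "l \<le> k" shows "k2_I1 k l = (\<lambda>b. idx k l b) ` {l<..k}"
proof (cases "l = k")
  case True then show ?thesis by (simp add: k2_I1_def)
next
  case False
  have e: "(l - 1) * k + a - l * (l - 1) div 2 = idx k l (l + a)" for a
  proof -
    have "idx k l (l + a) = off k l + a" using idx_off[of l "l+a" k] assms by simp
    moreover have "off k l = (l - 1) * k + l - l * (l + 1) div 2" by (simp add: off_def idx_def)
    moreover have "l * (l + 1) div 2 \<le> (l - 1) * k + l" using tri_le[of l k] assms by simp
    ultimately show ?thesis using tri_m[of l] by linarith
  qed
  show ?thesis
  proof
    show "k2_I1 k l \<subseteq> (\<lambda>b. idx k l b) ` {l<..k}"
    proof
      fix x assume "x \<in> k2_I1 k l"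
      then obtain a where "x = (l - 1) * k + a - l * (l - 1) div 2" "1 \<le> a" "a \<le> k - l"
        using False by (auto simp: k2_I1_def)
      then show "x \<in> (\<lambda>b. idx k l b) ` {l<..k}" using e[of a] assms
        by (intro image_eqI[of _ _ "l + a"]) auto
    qed
  next
    show "(\<lambda>b. idx k l b) ` {l<..k} \<subseteq> k2_I1 k l"
    proof
      fix x assume "x \<in> (\<lambda>b. idx k l b) ` {l<..k}"
      then obtain b where b: "x = idx k l b" "l < b" "b \<le> k" by auto
      have xe: "x = (l - 1) * k + (b - l) - l * (l - 1) div 2" using e[of "b - l"] b by simp
      have "1 \<le> b - l" "b - l \<le> k - l" using b by auto
      then have "x \<in> {(l - 1) * k + a - l * (l - 1) div 2 | a. 1 \<le> a \<and> a \<le> k - l}"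
        using xe by blast
      then show "x \<in> k2_I1 k l" using False by (simp add: k2_I1_def)
    qed
  qed
qed

lemma I2_eq: shows "k2_I2 k l = (\<lambda>a. idx k a l) ` {1..<l}"
proof (cases "l = 1")
  case True then show ?thesis by (simp add: k2_I2_def)
next
  case False
  have "{a. 1 \<le> a \<and> a \<le> l - 1} = {1..<l}" using False by auto
  then show ?thesis using False
    by (simp only: k2_I2_def idx_def setcompr_eq_image if_False)
qed

definition pr :: "nat \<Rightarrow> nat \<Rightarrow> nat \<times> nat" where
  "pr k = the_inv_into (Pairs k) (\<lambda>(a, b). idx k a b)"

lemma idx_bij: "bij_betw (\<lambda>(a, b). idx k a b) (Pairs k) {1..k2_m k}"
  unfolding bij_betw_def
proof
  show "inj_on (\<lambda>(a, b). idx k a b) (Pairs k)"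
    by (auto simp: inj_on_def dest: idx_inj)
  show "(\<lambda>(a, b). idx k a b) ` Pairs k = {1..k2_m k}"
    using idx_range idx_surj by fastforce
qed

definition lo :: "nat \<Rightarrow> nat \<Rightarrow> nat" where "lo k i = fst (pr k i)"
definition hi :: "nat \<Rightarrow> nat \<Rightarrow> nat" where "hi k i = snd (pr k i)"

lemma pr_props: assumes "i \<in> {1..k2_m k}"
  shows "pr k i \<in> Pairs k" "idx k (lo k i) (hi k i) = i"
proof -
  have "the_inv_into (Pairs k) (\<lambda>(a, b). idx k a b) i \<in> Pairs k"
    using idx_bij assms by (metis bij_betw_def the_inv_into_into order_refl)
  then show "pr k i \<in> Pairs k" by (simp add: pr_def)
  have "(\<lambda>(a, b). idx k a b) (the_inv_into (Pairs k) (\<lambda>(a, b). idx k a b) i) = i"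
    using idx_bij assms by (metis bij_betw_def f_the_inv_into_f)
  then show "idx k (lo k i) (hi k i) = i" by (simp add: pr_def lo_def hi_def split: prod.splits)
qed

lemma lohi: assumes "i \<in> {1..k2_m k}" shows "1 \<le> lo k i" "lo k i < hi k i" "hi k i \<le> k"
  using pr_props(1)[OF assms] by (auto simp: Pairs_def lo_def hi_def split: prod.splits)

lemma pr_idx: assumes "(a, b) \<in> Pairs k" shows "lo k (idx k a b) = a" "hi k (idx k a b) = b"
proof -
  have "pr k (idx k a b) = (a, b)"
    using idx_bij assms unfolding pr_def bij_betw_def
    by (metis (mono_tags, lifting) case_prod_conv the_inv_into_f_f)
  then show "lo k (idx k a b) = a" "hi k (idx k a b) = b" by (auto simp: lo_def hi_def)
qed

lemma lohi_inj: assumes "i \<in> {1..k2_m k}" "i' \<in> {1..k2_m k}" "lo k i = lo k i'" "hi k i = hi k i'"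
  shows "i = i'"
  using pr_props(2)[OF assms(1)] pr_props(2)[OF assms(2)] assms(3,4) by metis

lemma I1_mem: assumes "1 \<le> l" "l \<le> k"
  shows "k2_I1 k l = {i \<in> {1..k2_m k}. lo k i = l}"
proof
  show "k2_I1 k l \<subseteq> {i \<in> {1..k2_m k}. lo k i = l}"
    using I1_eq[OF assms] idx_range pr_idx assms by (force simp: Pairs_def)
next
  show "{i \<in> {1..k2_m k}. lo k i = l} \<subseteq> k2_I1 k l"
  proof
    fix i assume i: "i \<in> {i \<in> {1..k2_m k}. lo k i = l}"
    then have "i = idx k l (hi k i)" using pr_props(2)[of i k] by simp
    moreover have "hi k i \<in> {l<..k}" using lohi[of i k] i by auto
    ultimately show "i \<in> k2_I1 k l" using I1_eq[OF assms] by auto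
  qed
qed

lemma I2_mem: assumes "1 \<le> l" "l \<le> k"
  shows "k2_I2 k l = {i \<in> {1..k2_m k}. hi k i = l}"
proof
  show "k2_I2 k l \<subseteq> {i \<in> {1..k2_m k}. hi k i = l}"
    using I2_eq[of k l] idx_range pr_idx assms by (force simp: Pairs_def)
next
  show "{i \<in> {1..k2_m k}. hi k i = l} \<subseteq> k2_I2 k l"
  proof
    fix i assume i: "i \<in> {i \<in> {1..k2_m k}. hi k i = l}"
    then have "i = idx k (lo k i) l" using pr_props(2)[of i k] by simp
    moreover have "lo k i \<in> {1..<l}" using lohi[of i k] i by auto
    ultimately show "i \<in> k2_I2 k l" using I2_eq[of k l] by auto
  qed
qed

definition vtx :: "nat \<Rightarrow> nat \<Rightarrow> nat \<Rightarrow> nat" where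
  "vtx k i j = (if j = 1 then lo k i else hi k i)"

definition star :: "nat \<Rightarrow> nat \<Rightarrow> nat set" where
  "star k v = {i \<in> {1..k2_m k}. lo k i = v \<or> hi k i = v}"

lemma I_star: "1 \<le> l \<Longrightarrow> l \<le> k \<Longrightarrow> k2_I k l = star k l"
  by (auto simp: k2_I_def I1_mem I2_mem star_def)

lemma A_eq: assumes "i \<in> {1..k2_m k}" "j \<in> {1, 2}"
  shows "k2_A k i j = star k (vtx k i j) - {i}" "vtx k i j \<in> {1..k}"
proof -
  have v: "vtx k i j \<in> {1..k}" using lohi[OF assms(1)] by (auto simp: vtx_def)
  show "vtx k i j \<in> {1..k}" by (rule v)
  have "(THE l. l \<in> {1..k} \<and> i \<in> k2_Ij j k l) = vtx k i j"
  proof (rule the_equality)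
    show "vtx k i j \<in> {1..k} \<and> i \<in> k2_Ij j k (vtx k i j)"
      using v assms by (auto simp: k2_Ij_def vtx_def I1_mem I2_mem)
  next
    fix l assume "l \<in> {1..k} \<and> i \<in> k2_Ij j k l"
    then show "l = vtx k i j" using assms
      by (auto simp: k2_Ij_def vtx_def I1_mem I2_mem split: if_splits)
  qed
  then show "k2_A k i j = star k (vtx k i j) - {i}"
    using v by (simp add: k2_A_def I_star)
qed



lemma star_sub: "star k v \<subseteq> {1..k2_m k}" by (auto simp: star_def)

lemma finite_star[simp]: "finite (star k v)" using star_sub finite_subset by blast

lemma vtx_star: assumes "i \<in> {1..k2_m k}" shows "i \<in> star k (vtx k i j)"
  using assms by (auto simp: star_def vtx_def)

lemma vset: assumes "i \<in> {1..k2_m k}"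
  shows "{v \<in> {1..k}. lo k i = v \<or> hi k i = v} = {lo k i, hi k i}" "card {lo k i, hi k i} = 2"
  using lohi[OF assms] by auto

lemma double_count:
  fixes f :: "nat \<Rightarrow> nat"
  shows "(\<Sum>v\<in>{1..k}. \<Sum>i\<in>star k v. f i) = 2 * (\<Sum>i\<in>{1..k2_m k}. f i)"
proof -
  have "(\<Sum>v\<in>{1..k}. \<Sum>i\<in>star k v. f i)
      = (\<Sum>v\<in>{1..k}. \<Sum>i\<in>{1..k2_m k}. if lo k i = v \<or> hi k i = v then f i else 0)"
    unfolding star_def by (intro sum.cong refl sum.inter_filter) simp
  also have "\<dots> = (\<Sum>i\<in>{1..k2_m k}. \<Sum>v\<in>{1..k}. if lo k i = v \<or> hi k i = v then f i else 0)"
    by (rule sum.swap)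
  also have "\<dots> = (\<Sum>i\<in>{1..k2_m k}. 2 * f i)"
  proof (rule sum.cong[OF refl])
    fix i assume i: "i \<in> {1..k2_m k}"
    have "(\<Sum>v\<in>{1..k}. if lo k i = v \<or> hi k i = v then f i else 0)
        = (\<Sum>v\<in>{v \<in> {1..k}. lo k i = v \<or> hi k i = v}. f i)"
      by (rule sum.inter_filter[symmetric]) simp
    also have "\<dots> = 2 * f i" using vset[OF i] by simp
    finally show "(\<Sum>v\<in>{1..k}. if lo k i = v \<or> hi k i = v then f i else 0) = 2 * f i" .
  qed
  finally show ?thesis by (simp add: sum_distrib_left)
qed

lemma last_vertex_even:
  fixes f :: "nat \<Rightarrow> nat"
  assumes "1 \<le> k"
  shows "even ((\<Sum>b<k - 1. \<Sum>i\<in>star k (Suc b). f i) + (\<Sum>i\<in>star k k. f i))"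
proof -
  have e1: "{1..k} = insert k {1..<k}" using assms by auto
  have e2: "{1..<k} = Suc ` {..<k - 1}" using assms
  proof -
    have "{1..<k} = {1..k-1}" using assms by auto
    then show ?thesis using image_Suc_lessThan[of "k - 1"] by simp
  qed
  have "(\<Sum>v\<in>{1..k}. \<Sum>i\<in>star k v. f i) = (\<Sum>i\<in>star k k. f i) + (\<Sum>v\<in>{1..<k}. \<Sum>i\<in>star k v. f i)"
    unfolding e1 by (simp)
  also have "(\<Sum>v\<in>{1..<k}. \<Sum>i\<in>star k v. f i) = (\<Sum>b<k - 1. \<Sum>i\<in>star k (Suc b). f i)"
    unfolding e2 by (simp add: sum.reindex)
  finally show ?thesis using double_count[of f k] by (metis add.commute dvd_triv_left)
qed

lemma odd_sum_parity:
  fixes a :: "nat \<Rightarrow> nat"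
  shows "odd (\<Sum>b\<in>B. (if odd (a b) then 1 else 0 :: nat)) = odd (\<Sum>b\<in>B. a b)"
proof (induction B rule: infinite_finite_induct)
  case (infinite A) then show ?case by simp
next
  case empty then show ?case by simp
next
  case (insert x F)
  have "(\<Sum>b\<in>insert x F. (if odd (a b) then 1 else 0 :: nat)) = (if odd (a x) then 1 else 0) + (\<Sum>b\<in>F. (if odd (a b) then 1 else 0 :: nat))"
    using insert by (simp add: sum.insert)
  moreover have "(\<Sum>b\<in>insert x F. a b) = a x + (\<Sum>b\<in>F. a b)" using insert by (simp add: sum.insert)
  ultimately show ?case using insert.IH by (simp only: odd_add) simp
qed

lemma star1: assumes "2 \<le> k" shows "star k 1 = (\<lambda>b. idx k 1 b) ` {1<..k}" "card (star k 1) = k - 1"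
proof -
  have "star k 1 = k2_I k 1" using I_star[of 1 k] assms by simp
  also have "\<dots> = k2_I1 k 1" by (simp add: k2_I_def k2_I2_def)
  also have "\<dots> = (\<lambda>b. idx k 1 b) ` {1<..k}" using I1_eq[of 1 k] assms by simp
  finally show s: "star k 1 = (\<lambda>b. idx k 1 b) ` {1<..k}" .
  have "inj_on (\<lambda>b. idx k 1 b) {1<..k}"
  proof (rule inj_onI)
    fix x y assume "x \<in> {1<..k}" "y \<in> {1<..k}" "idx k 1 x = idx k 1 y"
    then show "x = y" using idx_inj[of 1 x k 1 y] by (simp add: Pairs_def)
  qed
  then show "card (star k 1) = k - 1" unfolding s by (simp add: card_image)
qed

lemma star1_A: assumes "i \<in> star k 1" "i' \<in> k2_A k i 2" shows "i' \<notin> star k 1"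
proof
  assume i': "i' \<in> star k 1"
  have im: "i \<in> {1..k2_m k}" using assms star_sub by blast
  have "k2_A k i 2 = star k (hi k i) - {i}" using A_eq[OF im, of 2] by (simp add: vtx_def)
  then have "i' \<in> star k (hi k i)" "i' \<noteq> i" using assms by auto
  moreover have "i' \<in> {1..k2_m k}" using i' star_sub by blast
  ultimately show False using i' assms(1) lohi[OF im] lohi[of i' k] lohi_inj[OF im, of i']
    by (auto simp: star_def)
qed



lemma users_mem: "(i, j) \<in> gic_users (k2_m k) k2_nU \<longleftrightarrow> i \<in> {1..k2_m k} \<and> j \<in> {1, 2}"
  by (auto simp: gic_users_def k2_nU_def)

lemma code_lb:
  assumes k: "2 \<le> k" and code: "has_index_code (k2_m k) k2_nU (k2_A k) t r"
  shows "(k - 1) * t \<le> r"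
proof -
  obtain \<phi> :: "(nat \<Rightarrow> nat \<Rightarrow> bool) \<Rightarrow> nat \<Rightarrow> bool"
     and \<psi> :: "nat \<Rightarrow> nat \<Rightarrow> (nat \<Rightarrow> bool) \<Rightarrow> (nat \<Rightarrow> nat \<Rightarrow> bool) \<Rightarrow> nat \<Rightarrow> bool"
    where enc: "\<forall>x \<in> packet_space (k2_m k) t. \<forall>b. r \<le> b \<longrightarrow> \<not> \<phi> x b"
      and dec: "\<forall>(i, j) \<in> gic_users (k2_m k) k2_nU. \<forall>x \<in> packet_space (k2_m k) t. \<forall>b < t.
            \<psi> i j (\<phi> x) (side_info (k2_A k i j) x) b = x i b"
    using code unfolding has_index_code_def by blast
  define S1 where "S1 = star k 1"
  define D where "D = S1 \<times> {..<t}"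
  define emb where "emb = (\<lambda>Z::(nat \<times> nat) set. \<lambda>i b. (i, b) \<in> Z)"
  define X where "X = emb ` Pow D"
  have finD: "finite D" by (simp add: D_def S1_def)
  have inj_emb: "inj_on emb (Pow D)"
  proof (rule inj_onI)
    fix Z Z' assume "emb Z = emb Z'"
    then have "\<And>i b. ((i, b) \<in> Z) = ((i, b) \<in> Z')" unfolding emb_def by meson
    then show "Z = Z'" by auto
  qed
  have cardX: "card X = 2 ^ ((k - 1) * t)"
  proof -
    have "card X = card (Pow D)" unfolding X_def using card_image[OF inj_emb] .
    also have "\<dots> = 2 ^ card D" using finD by (simp add: card_Pow)
    also have "card D = (k - 1) * t" unfolding D_def S1_def using star1(2)[OF k] by (simp add: card_cartesian_product)
    finally show ?thesis .
  qed
  have Xps: "X \<subseteq> packet_space (k2_m k) t"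
    unfolding X_def emb_def packet_space_def D_def S1_def using star_sub by fastforce
  have Xout: "x i b = False" if "x \<in> X" "i \<notin> S1" for x i b
    using that unfolding X_def emb_def D_def by auto
  have inj_phi: "inj_on \<phi> X"
  proof (rule inj_onI)
    fix x y assume x: "x \<in> X" and y: "y \<in> X" and e: "\<phi> x = \<phi> y"
    show "x = y"
    proof (rule ext, rule ext)
      fix i b
      show "x i b = y i b"
      proof (cases "i \<in> S1 \<and> b < t")
        case True
        then have im: "i \<in> {1..k2_m k}" using star_sub S1_def by blast
        have u: "(i, 2) \<in> gic_users (k2_m k) k2_nU" using im by (simp add: users_mem)
        have si: "side_info (k2_A k i 2) x = side_info (k2_A k i 2) y"
        proof (rule ext, rule ext)
          fix i' b'
          show "side_info (k2_A k i 2) x i' b' = side_info (k2_A k i 2) y i' b'"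
          proof (cases "i' \<in> k2_A k i 2")
            case True
            then have "i' \<notin> S1" using star1_A \<open>i \<in> S1 \<and> b < t\<close> S1_def by blast
            then show ?thesis using Xout[OF x \<open>i' \<notin> S1\<close>] Xout[OF y \<open>i' \<notin> S1\<close>] by (simp add: side_info_def)
          qed (simp add: side_info_def)
        qed
        have "x i b = \<psi> i 2 (\<phi> x) (side_info (k2_A k i 2) x) b"
          using dec u x Xps True by fastforce
        also have "\<dots> = \<psi> i 2 (\<phi> y) (side_info (k2_A k i 2) y) b" using e si by simp
        also have "\<dots> = y i b" using dec u y Xps True by fastforce
        finally show ?thesis .
      next
        case False
        then have "x i b = False" "y i b = False"
          using x y unfolding X_def emb_def D_def by auto
        then show ?thesis by simp
      qed
    qed
  qed
  define CW where "CW = (\<lambda>B::nat set. \<lambda>b. b \<in> B) ` Pow {..<r}"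
  have sub: "\<phi> ` X \<subseteq> CW"
  proof
    fix w assume "w \<in> \<phi> ` X"
    then obtain x where x: "x \<in> X" "w = \<phi> x" by auto
    have "w = (\<lambda>b. b \<in> {b. b < r \<and> w b})"
    proof
      fix b show "w b = (b \<in> {b. b < r \<and> w b})"
        using enc x Xps by (cases "b < r") auto
    qed
    moreover have "{b. b < r \<and> w b} \<in> Pow {..<r}" by auto
    ultimately show "w \<in> CW" unfolding CW_def by blast
  qed
  have "card X = card (\<phi> ` X)" using card_image[OF inj_phi] by simp
  also have "\<dots> \<le> card CW" using sub by (rule card_mono[rotated]) (simp add: CW_def)
  also have "\<dots> \<le> card (Pow {..<r::nat})" unfolding CW_def by (rule card_image_le) simp
  also have "\<dots> = 2 ^ r" by (simp add: card_Pow)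
  finally have "2 ^ ((k - 1) * t) \<le> (2::nat) ^ r" using cardX by simp
  then show ?thesis by simp
qed

definition cnt :: "(nat \<Rightarrow> nat \<Rightarrow> bool) \<Rightarrow> nat set \<Rightarrow> nat" where
  "cnt x B = (\<Sum>i\<in>B. if x i 0 then 1 else 0)"

lemma cnt_split: assumes "i \<in> B" "finite B"
  shows "odd (cnt x B) = (x i 0 \<noteq> odd (cnt x (B - {i})))"
proof -
  have "cnt x B = (if x i 0 then 1 else 0) + cnt x (B - {i})"
    unfolding cnt_def using assms by (simp add: sum.remove)
  then show ?thesis by auto
qed

lemma code_ub: assumes k: "2 \<le> k" shows "has_index_code (k2_m k) k2_nU (k2_A k) 1 (k - 1)"
proof -
  define \<phi> where "\<phi> = (\<lambda>x b. b < k - 1 \<and> odd (cnt x (star k (Suc b))))"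
  define \<psi> where "\<psi> = (\<lambda>i j (cw :: nat \<Rightarrow> bool) si (b::nat).
     (if vtx k i j < k then cw (vtx k i j - 1)
      else odd (\<Sum>b'<k - 1. if cw b' then 1 else 0 :: nat)) \<noteq> odd (cnt si (star k (vtx k i j) - {i})))"
  have "\<forall>(i, j) \<in> gic_users (k2_m k) k2_nU. \<forall>x \<in> packet_space (k2_m k) 1. \<forall>b < 1.
            \<psi> i j (\<phi> x) (side_info (k2_A k i j) x) b = x i b"
  proof (intro ballI allI impI, clarify)
    fix i j x assume u: "(i, j) \<in> gic_users (k2_m k) k2_nU" and x: "x \<in> packet_space (k2_m k) 1"
    have im: "i \<in> {1..k2_m k}" and j: "j \<in> {1, 2}" using u by (auto simp: users_mem)
    define v where "v = vtx k i j"
    have v: "v \<in> {1..k}" and A: "k2_A k i j = star k v - {i}" using A_eq[OF im j] v_def by auto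
    have iv: "i \<in> star k v" using vtx_star[OF im] v_def by simp
    have c1: "cnt (side_info (k2_A k i j) x) (star k v - {i}) = cnt x (star k v - {i})"
      unfolding cnt_def A side_info_def by (intro sum.cong) auto
    have c2: "odd (cnt x (star k v)) = (x i 0 \<noteq> odd (cnt x (star k v - {i})))"
      by (rule cnt_split[OF iv]) simp
    have top: "(if v < k then \<phi> x (v - 1) else odd (\<Sum>b'<k - 1. if \<phi> x b' then 1 else 0 :: nat))
               = odd (cnt x (star k v))"
    proof (cases "v < k")
      case True
      then have "v - 1 < k - 1" using v by auto
      then show ?thesis using True v by (simp add: \<phi>_def)
    next
      case False
      then have vk: "v = k" using v by simp
      have "(\<Sum>b'<k - 1. if \<phi> x b' then 1 else 0 :: nat) = (\<Sum>b'<k - 1. if odd (cnt x (star k (Suc b'))) then 1 else 0)"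
        by (intro sum.cong) (auto simp: \<phi>_def)
      then have "odd (\<Sum>b'<k - 1. if \<phi> x b' then 1 else 0 :: nat) = odd (\<Sum>b'<k - 1. cnt x (star k (Suc b')))"
        using odd_sum_parity[of "\<lambda>b'. cnt x (star k (Suc b'))" "{..<k-1}"] by simp
      also have "\<dots> = odd (cnt x (star k k))"
        using last_vertex_even[of k "\<lambda>i. if x i 0 then 1 else 0"] k unfolding cnt_def by auto
      finally show ?thesis using vk False by simp
    qed
    show "\<psi> i j (\<phi> x) (side_info (k2_A k i j) x) 0 = x i 0"
      unfolding \<psi>_def v_def[symmetric] c1 using top c2 by auto
  qed
  moreover have "\<forall>x \<in> packet_space (k2_m k) 1. \<forall>b. k - 1 \<le> b \<longrightarrow> \<not> \<phi> x b"
    by (simp add: \<phi>_def)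
  ultimately show ?thesis unfolding has_index_code_def by blast
qed

lemma gic_beta_val: assumes k: "2 \<le> k" shows "gic_beta (k2_m k) k2_nU (k2_A k) = real (k - 1)"
  unfolding gic_beta_def
proof (rule cInf_eq_minimum)
  show "real (k - 1) \<in> {real r / real t |r t. 0 < t \<and> has_index_code (k2_m k) k2_nU (k2_A k) t r}"
    using code_ub[OF k] by force
next
  fix q assume "q \<in> {real r / real t |r t. 0 < t \<and> has_index_code (k2_m k) k2_nU (k2_A k) t r}"
  then obtain r t where q: "q = real r / real t" "0 < t" "has_index_code (k2_m k) k2_nU (k2_A k) t r"
    by blast
  have "(k - 1) * t \<le> r" using code_lb[OF k q(3)] .
  then have "real (k - 1) * real t \<le> real r" by (metis of_nat_le_iff of_nat_mult)
  then show "real (k - 1) \<le> q" using q by (simp add: pos_le_divide_eq)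
qed



lemma (in abelian_monoid) finsum_swap:
  assumes "finite A" "finite B" "\<And>a b. a \<in> A \<Longrightarrow> b \<in> B \<Longrightarrow> g a b \<in> carrier G"
  shows "finsum G (\<lambda>a. finsum G (\<lambda>b. g a b) B) A = finsum G (\<lambda>b. finsum G (\<lambda>a. g a b) A) B"
  using assms
proof (induction A rule: finite_induct)
  case empty then show ?case by (simp add: finsum_zero)
next
  case (insert x F)
  have c1: "(\<lambda>b. g x b) \<in> B \<rightarrow> carrier G" using insert by auto
  have c2: "(\<lambda>b. finsum G (\<lambda>a. g a b) F) \<in> B \<rightarrow> carrier G" using insert by (auto intro: finsum_closed)
  have "finsum G (\<lambda>a. finsum G (\<lambda>b. g a b) B) (insert x F)
      = finsum G (\<lambda>b. g x b) B \<oplus> finsum G (\<lambda>a. finsum G (\<lambda>b. g a b) B) F"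
    using insert by (intro finsum_insert) (auto intro: finsum_closed)
  also have "\<dots> = finsum G (\<lambda>b. g x b) B \<oplus> finsum G (\<lambda>b. finsum G (\<lambda>a. g a b) F) B"
    using insert by simp
  also have "\<dots> = finsum G (\<lambda>b. g x b \<oplus> finsum G (\<lambda>a. g a b) F) B"
    using finsum_addf[OF c1 c2] by simp
  also have "\<dots> = finsum G (\<lambda>b. finsum G (\<lambda>a. g a b) (insert x F)) B"
    using insert by (intro finsum_cong) (auto simp: finsum_insert intro: finsum_closed)
  finally show ?case .
qed

definition dotp :: "'c ring \<Rightarrow> nat \<Rightarrow> (nat \<Rightarrow> 'c) \<Rightarrow> (nat \<Rightarrow> 'c) \<Rightarrow> 'c" where
  "dotp R m v x = finsum R (\<lambda>i. v i \<otimes>\<^bsub>R\<^esub> x i) {1..m}"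

lemma rank_lb:
  fixes R :: "'c ring"
  assumes F: "field R" and fin: "finite (carrier R)"
    and S: "finite S" "\<forall>v\<in>S. \<forall>i. v i \<in> carrier R"
    and S0: "finite S0"
    and dec: "\<And>x y. (\<forall>i. x i \<in> carrier R) \<Longrightarrow> (\<forall>i. y i \<in> carrier R)
       \<Longrightarrow> (\<forall>i. i \<notin> S0 \<longrightarrow> x i = \<zero>\<^bsub>R\<^esub> \<and> y i = \<zero>\<^bsub>R\<^esub>)
       \<Longrightarrow> (\<forall>v\<in>S. dotp R m v x = dotp R m v y) \<Longrightarrow> \<forall>i\<in>S0. x i = y i"
  shows "card S0 \<le> vec_rank R m S"
proof -
  interpret field R by (rule F)
  define C where "C = {card T | T. T \<subseteq> S \<and> lin_indep_vecs R m T}"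
  have finC: "finite C"
  proof -
    have "C \<subseteq> card ` Pow S" unfolding C_def by auto
    then show ?thesis using S(1) finite_subset by blast
  qed
  have "0 \<in> C" unfolding C_def lin_indep_vecs_def by (auto intro!: exI[of _ "{}"])
  then have "C \<noteq> {}" by blast
  then have "Max C \<in> C" using finC by (rule Max_in[rotated])
  then have "\<exists>T. Max C = card T \<and> T \<subseteq> S \<and> lin_indep_vecs R m T" unfolding C_def by (simp only: mem_Collect_eq)
  then obtain T where T: "T \<subseteq> S" "lin_indep_vecs R m T" "card T = Max C" by metis
  have rk: "vec_rank R m S = card T" using T(3) unfolding vec_rank_def C_def[symmetric] by simp
  have finT: "finite T" using T(1) S(1) finite_subset by blast
  have Tc: "\<forall>v\<in>T. \<forall>i. v i \<in> carrier R" using T(1) S(2) by blast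
  have dcl: "dotp R m u z \<in> carrier R" if "\<forall>i. u i \<in> carrier R" "\<forall>i. z i \<in> carrier R" for u z
    using that unfolding dotp_def by (intro finsum_closed) auto
  have maxT: "\<not> lin_indep_vecs R m (insert v T)" if "v \<in> S" "v \<notin> T" for v
  proof
    assume "lin_indep_vecs R m (insert v T)"
    then have "card (insert v T) \<in> C" using that T(1) unfolding C_def by blast
    then have "card (insert v T) \<le> Max C" using finC by simp
    then show False using T(3) finT that(2) by simp
  qed
  have span: "dotp R m v x = dotp R m v y"
    if x: "\<forall>i. x i \<in> carrier R" and y: "\<forall>i. y i \<in> carrier R"
      and eqT: "\<forall>w\<in>T. dotp R m w x = dotp R m w y" and v: "v \<in> S" for x y v
  proof (cases "v \<in> T")
    case True then show ?thesis using eqT by simp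
  next
    case False
    have vc: "\<forall>i. v i \<in> carrier R" using v S(2) by blast
    obtain c where c: "\<forall>u\<in>insert v T. c u \<in> carrier R"
      and c0: "\<forall>i\<in>{1..m}. finsum R (\<lambda>u. c u \<otimes>\<^bsub>R\<^esub> u i) (insert v T) = \<zero>\<^bsub>R\<^esub>"
      and cn: "\<exists>u\<in>insert v T. c u \<noteq> \<zero>\<^bsub>R\<^esub>"
      using maxT[OF v False] finT unfolding lin_indep_vecs_def by auto
    have cv: "c v \<noteq> \<zero>\<^bsub>R\<^esub>"
    proof
      assume cv0: "c v = \<zero>\<^bsub>R\<^esub>"
      have "\<forall>i\<in>{1..m}. finsum R (\<lambda>u. c u \<otimes>\<^bsub>R\<^esub> u i) T = \<zero>\<^bsub>R\<^esub>"
      proof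
        fix i assume i: "i \<in> {1..m}"
        have "finsum R (\<lambda>u. c u \<otimes>\<^bsub>R\<^esub> u i) (insert v T) = c v \<otimes>\<^bsub>R\<^esub> v i \<oplus>\<^bsub>R\<^esub> finsum R (\<lambda>u. c u \<otimes>\<^bsub>R\<^esub> u i) T"
          using finT False c Tc vc by (intro finsum_insert) auto
        also have "\<dots> = finsum R (\<lambda>u. c u \<otimes>\<^bsub>R\<^esub> u i) T"
          using cv0 vc c Tc by (simp add: finsum_closed Pi_def)
        finally show "finsum R (\<lambda>u. c u \<otimes>\<^bsub>R\<^esub> u i) T = \<zero>\<^bsub>R\<^esub>" using c0 i by simp
      qed
      then have "\<forall>u\<in>T. c u = \<zero>\<^bsub>R\<^esub>" using T(2) c unfolding lin_indep_vecs_def by auto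
      then show False using cn cv0 by auto
    qed
    have key: "c v \<otimes>\<^bsub>R\<^esub> dotp R m v z \<oplus>\<^bsub>R\<^esub> finsum R (\<lambda>u. c u \<otimes>\<^bsub>R\<^esub> dotp R m u z) T = \<zero>\<^bsub>R\<^esub>"
      if z: "\<forall>i. z i \<in> carrier R" for z
    proof -
      have cc: "\<forall>u\<in>insert v T. \<forall>i. u i \<in> carrier R" using vc Tc by auto
      have dc: "dotp R m u z \<in> carrier R" if "u \<in> insert v T" for u
        using cc that z unfolding dotp_def by (auto intro: finsum_closed)
      have "finsum R (\<lambda>u. c u \<otimes>\<^bsub>R\<^esub> dotp R m u z) (insert v T)
          = finsum R (\<lambda>u. finsum R (\<lambda>i. c u \<otimes>\<^bsub>R\<^esub> (u i \<otimes>\<^bsub>R\<^esub> z i)) {1..m}) (insert v T)"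
      proof (rule finsum_cong'[OF refl])
        show "(\<lambda>u. finsum R (\<lambda>i. c u \<otimes>\<^bsub>R\<^esub> (u i \<otimes>\<^bsub>R\<^esub> z i)) {1..m}) \<in> insert v T \<rightarrow> carrier R"
          using c cc z by (auto intro!: finsum_closed)
      next
        fix u assume u: "u \<in> insert v T"
        then have "c u \<in> carrier R" "\<forall>i. u i \<in> carrier R" using c cc by auto
        then show "c u \<otimes>\<^bsub>R\<^esub> dotp R m u z = finsum R (\<lambda>i. c u \<otimes>\<^bsub>R\<^esub> (u i \<otimes>\<^bsub>R\<^esub> z i)) {1..m}"
          unfolding dotp_def using z by (intro finsum_rdistr) auto
      qed
      also have "\<dots> = finsum R (\<lambda>i. finsum R (\<lambda>u. c u \<otimes>\<^bsub>R\<^esub> (u i \<otimes>\<^bsub>R\<^esub> z i)) (insert v T)) {1..m}"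
        using finT c cc z by (intro finsum_swap) auto
      also have "\<dots> = finsum R (\<lambda>i. finsum R (\<lambda>u. c u \<otimes>\<^bsub>R\<^esub> u i) (insert v T) \<otimes>\<^bsub>R\<^esub> z i) {1..m}"
      proof (rule finsum_cong'[OF refl])
        show "(\<lambda>i. finsum R (\<lambda>u. c u \<otimes>\<^bsub>R\<^esub> u i) (insert v T) \<otimes>\<^bsub>R\<^esub> z i) \<in> {1..m} \<rightarrow> carrier R"
          using c cc z by (auto intro!: finsum_closed)
      next
        fix i assume i: "i \<in> {1..m}"
        have "finsum R (\<lambda>u. c u \<otimes>\<^bsub>R\<^esub> u i) (insert v T) \<otimes>\<^bsub>R\<^esub> z i
            = finsum R (\<lambda>u. (c u \<otimes>\<^bsub>R\<^esub> u i) \<otimes>\<^bsub>R\<^esub> z i) (insert v T)"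
          using finT c cc z by (intro finsum_ldistr) auto
        also have "\<dots> = finsum R (\<lambda>u. c u \<otimes>\<^bsub>R\<^esub> (u i \<otimes>\<^bsub>R\<^esub> z i)) (insert v T)"
          using c cc z by (intro finsum_cong'[OF refl]) (auto simp: m_assoc)
        finally show "finsum R (\<lambda>u. c u \<otimes>\<^bsub>R\<^esub> (u i \<otimes>\<^bsub>R\<^esub> z i)) (insert v T)
            = finsum R (\<lambda>u. c u \<otimes>\<^bsub>R\<^esub> u i) (insert v T) \<otimes>\<^bsub>R\<^esub> z i" by simp
      qed
      also have "\<dots> = finsum R (\<lambda>i. \<zero>\<^bsub>R\<^esub>) {1..m}"
        using c0 z by (intro finsum_cong) auto
      also have "\<dots> = \<zero>\<^bsub>R\<^esub>" by (simp add: finsum_zero)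
      finally have "finsum R (\<lambda>u. c u \<otimes>\<^bsub>R\<^esub> dotp R m u z) (insert v T) = \<zero>\<^bsub>R\<^esub>" .
      moreover have "finsum R (\<lambda>u. c u \<otimes>\<^bsub>R\<^esub> dotp R m u z) (insert v T)
          = c v \<otimes>\<^bsub>R\<^esub> dotp R m v z \<oplus>\<^bsub>R\<^esub> finsum R (\<lambda>u. c u \<otimes>\<^bsub>R\<^esub> dotp R m u z) T"
        using finT False c dc by (intro finsum_insert) auto
      ultimately show ?thesis by simp
    qed
    have sT: "finsum R (\<lambda>u. c u \<otimes>\<^bsub>R\<^esub> dotp R m u x) T = finsum R (\<lambda>u. c u \<otimes>\<^bsub>R\<^esub> dotp R m u y) T"
      using eqT c Tc y dcl by (intro finsum_cong) auto
    have dxc: "dotp R m v x \<in> carrier R" "dotp R m v y \<in> carrier R"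
      using vc x y unfolding dotp_def by (auto intro: finsum_closed)
    have sc: "finsum R (\<lambda>u. c u \<otimes>\<^bsub>R\<^esub> dotp R m u y) T \<in> carrier R"
      using Tc c y unfolding dotp_def by (auto intro!: finsum_closed)
    have cvc: "c v \<in> carrier R" using c by simp
    have e1: "c v \<otimes>\<^bsub>R\<^esub> dotp R m v x = \<ominus>\<^bsub>R\<^esub> finsum R (\<lambda>u. c u \<otimes>\<^bsub>R\<^esub> dotp R m u y) T"
      using key[OF x] sT sc cvc dxc by (metis add.inv_equality m_closed a_comm)
    have e2: "c v \<otimes>\<^bsub>R\<^esub> dotp R m v y = \<ominus>\<^bsub>R\<^esub> finsum R (\<lambda>u. c u \<otimes>\<^bsub>R\<^esub> dotp R m u y) T"
      using key[OF y] sc cvc dxc by (metis add.inv_equality m_closed a_comm)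
    show ?thesis using e1 e2 m_lcancel[OF cv cvc dxc] by simp
  qed
  define K where "K = carrier R"
  define ext where "ext = (\<lambda>f i. if i \<in> S0 then f i else \<zero>\<^bsub>R\<^esub>)"
  define Fm where "Fm = (\<lambda>f. restrict (\<lambda>w. dotp R m w (ext f)) T)"
  have extc: "\<forall>i. ext f i \<in> carrier R" if "f \<in> PiE S0 (\<lambda>_. K)" for f
    using that unfolding ext_def K_def by (auto simp: PiE_def Pi_def)
  have img: "Fm ` PiE S0 (\<lambda>_. K) \<subseteq> PiE T (\<lambda>_. K)"
  proof
    fix g assume "g \<in> Fm ` PiE S0 (\<lambda>_. K)"
    then obtain f where f: "f \<in> PiE S0 (\<lambda>_. K)" "g = Fm f" by auto
    have "dotp R m w (ext f) \<in> K" if "w \<in> T" for w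
      using Tc that extc[OF f(1)] unfolding dotp_def K_def by (auto intro!: finsum_closed)
    then show "g \<in> PiE T (\<lambda>_. K)" using f(2) unfolding Fm_def by auto
  qed
  have inj: "inj_on Fm (PiE S0 (\<lambda>_. K))"
  proof (rule inj_onI)
    fix f g assume f: "f \<in> PiE S0 (\<lambda>_. K)" and g: "g \<in> PiE S0 (\<lambda>_. K)" and e: "Fm f = Fm g"
    have "\<forall>w\<in>T. dotp R m w (ext f) = dotp R m w (ext g)"
    proof
      fix w assume w: "w \<in> T"
      have "Fm f w = Fm g w" using e by simp
      then show "dotp R m w (ext f) = dotp R m w (ext g)" using w unfolding Fm_def by simp
    qed
    then have "\<forall>v\<in>S. dotp R m v (ext f) = dotp R m v (ext g)"
      using span[OF extc[OF f] extc[OF g]] by blast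
    then have "\<forall>i\<in>S0. ext f i = ext g i"
      using dec[OF extc[OF f] extc[OF g]] by (auto simp: ext_def)
    then show "f = g" using f g by (intro PiE_ext[OF f g]) (auto simp: ext_def)
  qed
  have finK: "finite K" using fin K_def by simp
  have "card (PiE S0 (\<lambda>_. K)) \<le> card (PiE T (\<lambda>_. K))"
    using card_inj_on_le[OF inj img] finK finT by (simp add: finite_PiE)
  then have le: "card K ^ card S0 \<le> card K ^ card T" using S0 finT by (simp add: card_PiE)
  have "{\<zero>\<^bsub>R\<^esub>, \<one>\<^bsub>R\<^esub>} \<subseteq> K" unfolding K_def by auto
  then have "card {\<zero>\<^bsub>R\<^esub>, \<one>\<^bsub>R\<^esub>} \<le> card K" using finK by (rule card_mono[rotated])
  then have "1 < card K" by simp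
  then have "card S0 \<le> card T" using le by (rule power_le_imp_le_exp)
  then show ?thesis using rk by simp
qed



lemma finite_users: "finite (gic_users (k2_m k) k2_nU)"
proof -
  have "gic_users (k2_m k) k2_nU \<subseteq> {1..k2_m k} \<times> {1, 2}" by (auto simp: users_mem)
  then show ?thesis using finite_subset by blast
qed

lemma finite_part: assumes "partition_on (gic_users (k2_m k) k2_nU) P" shows "finite P"
  using assms finite_users[of k] unfolding partition_on_def by (metis finite_UnionD)

lemma finite_rows: assumes "finite P" shows "finite (choice_rows A P \<alpha>)"
proof -
  have "choice_rows A P \<alpha> = (\<Union>W\<in>P. (\<lambda>kk. \<alpha> W kk) ` {..<part_b A W})"
    unfolding choice_rows_def by auto
  then show ?thesis using assms by simp
qed

lemma iupm_lb:
  fixes R :: "nat ring"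
  assumes k: "2 \<le> k"
    and P: "partition_on (gic_users (k2_m k) k2_nU) P"
    and F: "field R" and card: "card (carrier R) = 2 ^ s"
    and V: "valid_choice R (k2_m k) (k2_A k) P \<alpha>"
  shows "k - 1 \<le> vec_rank R (k2_m k) (choice_rows (k2_A k) P \<alpha>)"
proof -
  define S where "S = choice_rows (k2_A k) P \<alpha>"
  define S0 where "S0 = star k 1"
  have finP: "finite P" using finite_part[OF P] .
  have finS: "finite S" unfolding S_def using finite_rows[OF finP] .
  have V1: "\<forall>W \<in> P. \<forall>kk < part_b (k2_A k) W. \<forall>i. \<alpha> W kk i \<in> carrier R"
    using V unfolding valid_choice_def by blast
  have Sc: "\<forall>v\<in>S. \<forall>i. v i \<in> carrier R" unfolding S_def choice_rows_def using V1 by blast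
  have finK: "finite (carrier R)" using card by (metis card_ge_0_finite pos2 zero_less_power)
  have "card S0 \<le> vec_rank R (k2_m k) S"
  proof (rule rank_lb[OF F finK finS Sc])
    show "finite S0" by (simp add: S0_def)
  next
    fix x y :: "nat \<Rightarrow> nat"
    assume x: "\<forall>i. x i \<in> carrier R" and y: "\<forall>i. y i \<in> carrier R"
      and z: "\<forall>i. i \<notin> S0 \<longrightarrow> x i = \<zero>\<^bsub>R\<^esub> \<and> y i = \<zero>\<^bsub>R\<^esub>"
      and e: "\<forall>v\<in>S. dotp R (k2_m k) v x = dotp R (k2_m k) v y"
    show "\<forall>i\<in>S0. x i = y i"
    proof
      fix i assume i: "i \<in> S0"
      have im: "i \<in> {1..k2_m k}" using i star_sub S0_def by blast
      have "(i, 2) \<in> gic_users (k2_m k) k2_nU" using im by (simp add: users_mem)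
      then obtain W where W: "W \<in> P" "(i, 2) \<in> W" using P unfolding partition_on_def by blast
      obtain \<psi> :: "(nat \<Rightarrow> nat) \<Rightarrow> (nat \<Rightarrow> nat) \<Rightarrow> nat" where
        psi: "\<forall>x :: nat \<Rightarrow> nat. (\<forall>i'. x i' \<in> carrier R) \<longrightarrow>
          \<psi> (\<lambda>kk. if kk < part_b (k2_A k) W
                   then finsum R (\<lambda>i'. \<alpha> W kk i' \<otimes>\<^bsub>R\<^esub> x i') {1..k2_m k} else \<zero>\<^bsub>R\<^esub>)
            (\<lambda>i'. if i' \<in> k2_A k i 2 then x i' else \<zero>\<^bsub>R\<^esub>) = x i"
      proof -
        have V2: "\<forall>W \<in> P. \<forall>(i, j) \<in> W. \<exists>\<psi> :: (nat \<Rightarrow> nat) \<Rightarrow> (nat \<Rightarrow> nat) \<Rightarrow> nat.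
          \<forall>x :: nat \<Rightarrow> nat. (\<forall>i'. x i' \<in> carrier R) \<longrightarrow>
          \<psi> (\<lambda>kk. if kk < part_b (k2_A k) W
                   then finsum R (\<lambda>i'. \<alpha> W kk i' \<otimes>\<^bsub>R\<^esub> x i') {1..k2_m k} else \<zero>\<^bsub>R\<^esub>)
            (\<lambda>i'. if i' \<in> k2_A k i j then x i' else \<zero>\<^bsub>R\<^esub>) = x i"
          using V unfolding valid_choice_def by (rule conjunct2)
        have "\<forall>(i, j) \<in> W. \<exists>\<psi> :: (nat \<Rightarrow> nat) \<Rightarrow> (nat \<Rightarrow> nat) \<Rightarrow> nat.
          \<forall>x :: nat \<Rightarrow> nat. (\<forall>i'. x i' \<in> carrier R) \<longrightarrow>
          \<psi> (\<lambda>kk. if kk < part_b (k2_A k) W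
                   then finsum R (\<lambda>i'. \<alpha> W kk i' \<otimes>\<^bsub>R\<^esub> x i') {1..k2_m k} else \<zero>\<^bsub>R\<^esub>)
            (\<lambda>i'. if i' \<in> k2_A k i j then x i' else \<zero>\<^bsub>R\<^esub>) = x i"
          using V2 W(1) by (rule bspec)
        from bspec[OF this W(2)] show ?thesis using that by (simp only: prod.case) blast
      qed
      have c: "(\<lambda>kk. if kk < part_b (k2_A k) W
                   then finsum R (\<lambda>i'. \<alpha> W kk i' \<otimes>\<^bsub>R\<^esub> x i') {1..k2_m k} else \<zero>\<^bsub>R\<^esub>)
             = (\<lambda>kk. if kk < part_b (k2_A k) W
                   then finsum R (\<lambda>i'. \<alpha> W kk i' \<otimes>\<^bsub>R\<^esub> y i') {1..k2_m k} else \<zero>\<^bsub>R\<^esub>)"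
      proof
        fix kk
        show "(if kk < part_b (k2_A k) W
                   then finsum R (\<lambda>i'. \<alpha> W kk i' \<otimes>\<^bsub>R\<^esub> x i') {1..k2_m k} else \<zero>\<^bsub>R\<^esub>)
             = (if kk < part_b (k2_A k) W
                   then finsum R (\<lambda>i'. \<alpha> W kk i' \<otimes>\<^bsub>R\<^esub> y i') {1..k2_m k} else \<zero>\<^bsub>R\<^esub>)"
        proof (cases "kk < part_b (k2_A k) W")
          case True
          then have "\<alpha> W kk \<in> S" unfolding S_def choice_rows_def using W by blast
          then show ?thesis using e True by (simp add: dotp_def)
        qed simp
      qed
      have s: "(\<lambda>i'. if i' \<in> k2_A k i 2 then x i' else \<zero>\<^bsub>R\<^esub>) = (\<lambda>i'. if i' \<in> k2_A k i 2 then y i' else \<zero>\<^bsub>R\<^esub>)"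
      proof
        fix i' show "(if i' \<in> k2_A k i 2 then x i' else \<zero>\<^bsub>R\<^esub>) = (if i' \<in> k2_A k i 2 then y i' else \<zero>\<^bsub>R\<^esub>)"
          using star1_A[of i k i'] i z S0_def by auto
      qed
      have "x i = \<psi> (\<lambda>kk. if kk < part_b (k2_A k) W
                   then finsum R (\<lambda>i'. \<alpha> W kk i' \<otimes>\<^bsub>R\<^esub> x i') {1..k2_m k} else \<zero>\<^bsub>R\<^esub>)
            (\<lambda>i'. if i' \<in> k2_A k i 2 then x i' else \<zero>\<^bsub>R\<^esub>)" using psi x by simp
      also have "\<dots> = y i" unfolding c s using psi y by simp
      finally show "x i = y i" .
    qed
  qed
  then show ?thesis using star1(2)[OF k] unfolding S_def S0_def by simp
qed



definition gf2 :: "nat ring" where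
  "gf2 = \<lparr>carrier = {0, 1}, mult = (\<lambda>a b. a * b), one = 1, zero = 0, add = (\<lambda>a b. (a + b) mod 2)\<rparr>"

lemma gf2_simps[simp]: "carrier gf2 = {0, 1}" "mult gf2 a b = a * b" "one gf2 = 1" "zero gf2 = 0"
  "add gf2 a b = (a + b) mod 2"
  by (simp_all add: gf2_def)

lemma gf2_cring: "cring gf2"
proof (rule cringI)
  show "abelian_group gf2"
    by (rule abelian_groupI) (auto simp: mod_add_left_eq mod_add_right_eq add.assoc)
  show "comm_monoid gf2"
    by (rule comm_monoidI) auto
  fix x y z :: nat
  assume "x \<in> carrier gf2" "y \<in> carrier gf2" "z \<in> carrier gf2"
  then show "(x \<oplus>\<^bsub>gf2\<^esub> y) \<otimes>\<^bsub>gf2\<^esub> z = x \<otimes>\<^bsub>gf2\<^esub> z \<oplus>\<^bsub>gf2\<^esub> y \<otimes>\<^bsub>gf2\<^esub> z"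
    by auto
qed

lemma gf2_field: "field gf2"
proof (rule cring.cring_fieldI2[OF gf2_cring])
  show "\<zero>\<^bsub>gf2\<^esub> \<noteq> \<one>\<^bsub>gf2\<^esub>" by simp
  fix a assume "a \<in> carrier gf2" "a \<noteq> \<zero>\<^bsub>gf2\<^esub>"
  then have "a = 1" by auto
  then show "\<exists>b\<in>carrier gf2. a \<otimes>\<^bsub>gf2\<^esub> b = \<one>\<^bsub>gf2\<^esub>" by auto
qed

lemma gf2_card: "card (carrier gf2) = 2 ^ 1" by simp

lemma gf2_finsum:
  assumes "finite A" "\<forall>a\<in>A. f a \<in> {0, 1}"
  shows "finsum gf2 f A = (\<Sum>a\<in>A. f a) mod 2"
  using assms
proof (induction A rule: finite_induct)
  case empty
  interpret cring gf2 by (rule gf2_cring)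
  show ?case by simp
next
  case (insert x F)
  interpret cring gf2 by (rule gf2_cring)
  have "finsum gf2 f (insert x F) = f x \<oplus>\<^bsub>gf2\<^esub> finsum gf2 f F"
    using insert by (intro finsum_insert) (auto simp: Pi_def)
  also have "\<dots> = (f x + (\<Sum>a\<in>F. f a) mod 2) mod 2" using insert by simp
  also have "\<dots> = (\<Sum>a\<in>insert x F. f a) mod 2" using insert by (simp add: mod_add_right_eq)
  finally show ?case .
qed

definition ind :: "nat set \<Rightarrow> nat \<Rightarrow> nat" where
  "ind B = (\<lambda>i. if i \<in> B then 1 else 0)"

lemma combo_gf2:
  assumes "B \<subseteq> {1..m}" "\<forall>i. x i \<in> {0, 1}"
  shows "finsum gf2 (\<lambda>i. ind B i \<otimes>\<^bsub>gf2\<^esub> x i) {1..m} = (\<Sum>i\<in>B. x i) mod 2"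
proof -
  have "finsum gf2 (\<lambda>i. ind B i \<otimes>\<^bsub>gf2\<^esub> x i) {1..m} = (\<Sum>i\<in>{1..m}. ind B i * x i) mod 2"
  proof -
    have "finsum gf2 (\<lambda>i. ind B i \<otimes>\<^bsub>gf2\<^esub> x i) {1..m} = finsum gf2 (\<lambda>i. ind B i * x i) {1..m}"
      by simp
    also have "\<dots> = (\<Sum>i\<in>{1..m}. ind B i * x i) mod 2"
      using assms by (intro gf2_finsum) (auto simp: ind_def)
    finally show ?thesis .
  qed
  also have "(\<Sum>i\<in>{1..m}. ind B i * x i) = (\<Sum>i\<in>B. x i)"
  proof -
    have "(\<Sum>i\<in>{1..m}. ind B i * x i) = (\<Sum>i\<in>{1..m}. if i \<in> B then x i else 0)"
      by (intro sum.cong) (auto simp: ind_def)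
    also have "\<dots> = (\<Sum>i\<in>{i \<in> {1..m}. i \<in> B}. x i)" by (rule sum.inter_filter[symmetric]) simp
    also have "{i \<in> {1..m}. i \<in> B} = B" using assms(1) by auto
    finally show ?thesis .
  qed
  finally show ?thesis .
qed

lemma parity_dec:
  fixes x :: "nat \<Rightarrow> nat" and Bs :: "nat \<Rightarrow> nat set"
  assumes x: "\<forall>i. x i \<in> {0, 1}" and K: "finite K" and Z: "Z \<subseteq> {1..m}"
    and B: "\<forall>kk\<in>K. Bs kk \<subseteq> {1..m}" and i: "i \<in> {1..m}"
    and par: "\<forall>i''\<in>{1..m}. even (card {kk\<in>K. i'' \<in> Bs kk} + (if i'' \<in> Z then 1 else 0) + (if i'' = i then 1 else 0))"
  shows "((\<Sum>kk\<in>K. (\<Sum>i'\<in>Bs kk. x i') mod 2) + (\<Sum>i'\<in>Z. x i')) mod 2 = x i"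
proof -
  have s1: "(\<Sum>i'\<in>Bs kk. x i') = (\<Sum>i''\<in>{1..m}. if i'' \<in> Bs kk then x i'' else 0)" if "kk \<in> K" for kk
  proof -
    have "(\<Sum>i''\<in>{1..m}. if i'' \<in> Bs kk then x i'' else 0) = (\<Sum>i''\<in>{i''\<in>{1..m}. i'' \<in> Bs kk}. x i'')"
      by (rule sum.inter_filter[symmetric]) simp
    also have "{i''\<in>{1..m}. i'' \<in> Bs kk} = Bs kk" using B that by blast
    finally show ?thesis by simp
  qed
  have s2: "(\<Sum>i'\<in>Z. x i') = (\<Sum>i''\<in>{1..m}. if i'' \<in> Z then x i'' else 0)"
  proof -
    have "(\<Sum>i''\<in>{1..m}. if i'' \<in> Z then x i'' else 0) = (\<Sum>i''\<in>{i''\<in>{1..m}. i'' \<in> Z}. x i'')"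
      by (rule sum.inter_filter[symmetric]) simp
    also have "{i''\<in>{1..m}. i'' \<in> Z} = Z" using Z by auto
    finally show ?thesis by simp
  qed
  have s3: "x i = (\<Sum>i''\<in>{1..m}. if i'' = i then x i'' else 0)" using i by simp
  have sw: "(\<Sum>kk\<in>K. \<Sum>i''\<in>{1..m}. if i'' \<in> Bs kk then x i'' else 0)
      = (\<Sum>i''\<in>{1..m}. card {kk\<in>K. i'' \<in> Bs kk} * x i'')"
  proof -
    have "(\<Sum>kk\<in>K. \<Sum>i''\<in>{1..m}. if i'' \<in> Bs kk then x i'' else 0)
        = (\<Sum>i''\<in>{1..m}. \<Sum>kk\<in>K. if i'' \<in> Bs kk then x i'' else 0)" by (rule sum.swap)
    also have "\<dots> = (\<Sum>i''\<in>{1..m}. card {kk\<in>K. i'' \<in> Bs kk} * x i'')"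
    proof (rule sum.cong[OF refl])
      fix i'' show "(\<Sum>kk\<in>K. if i'' \<in> Bs kk then x i'' else 0) = card {kk\<in>K. i'' \<in> Bs kk} * x i''"
        using K by (simp add: sum.inter_filter[symmetric])
    qed
    finally show ?thesis .
  qed
  define T where "T = (\<Sum>kk\<in>K. \<Sum>i'\<in>Bs kk. x i') + (\<Sum>i'\<in>Z. x i')"
  have "T + x i = (\<Sum>i''\<in>{1..m}. (card {kk\<in>K. i'' \<in> Bs kk} + (if i'' \<in> Z then 1 else 0) + (if i'' = i then 1 else 0)) * x i'')"
  proof -
    have "(\<Sum>kk\<in>K. \<Sum>i'\<in>Bs kk. x i') = (\<Sum>kk\<in>K. \<Sum>i''\<in>{1..m}. if i'' \<in> Bs kk then x i'' else 0)"
      by (rule sum.cong[OF refl], rule s1)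
    then have "T + x i = (\<Sum>i''\<in>{1..m}. card {kk\<in>K. i'' \<in> Bs kk} * x i'')
        + (\<Sum>i''\<in>{1..m}. if i'' \<in> Z then x i'' else 0) + (\<Sum>i''\<in>{1..m}. if i'' = i then x i'' else 0)"
      unfolding T_def using sw s2 s3 by simp
    also have "\<dots> = (\<Sum>i''\<in>{1..m}. (card {kk\<in>K. i'' \<in> Bs kk} + (if i'' \<in> Z then 1 else 0) + (if i'' = i then 1 else 0)) * x i'')"
    proof -
      have pw: "(card {kk\<in>K. i'' \<in> Bs kk} + (if i'' \<in> Z then 1 else 0) + (if i'' = i then 1 else 0)) * x i''
          = card {kk\<in>K. i'' \<in> Bs kk} * x i'' + (if i'' \<in> Z then x i'' else 0) + (if i'' = i then x i'' else 0)" for i''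
        by (simp add: algebra_simps)
      show ?thesis unfolding pw by (simp only: sum.distrib)
    qed
    finally show ?thesis .
  qed
  then have ev: "even (T + x i)" using par by (auto intro!: dvd_sum)
  have "((\<Sum>kk\<in>K. (\<Sum>i'\<in>Bs kk. x i') mod 2) + (\<Sum>i'\<in>Z. x i')) mod 2 = T mod 2"
    unfolding T_def by (metis mod_add_left_eq mod_sum_eq)
  also have "\<dots> = x i"
  proof -
    have "x i = 0 \<or> x i = 1" using x by auto
    then show ?thesis
    proof
      assume "x i = 0" then show ?thesis using ev by (simp add: even_iff_mod_2_eq_zero)
    next
      assume "x i = 1" then show ?thesis using ev by (simp add: odd_iff_mod_2_eq_one)
    qed
  qed
  finally show ?thesis .
qed



definition par_ok :: "nat \<Rightarrow> (nat \<Rightarrow> nat set) \<Rightarrow> nat set \<Rightarrow> nat set \<Rightarrow> nat \<Rightarrow> bool" where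
  "par_ok m Bs K Z i \<longleftrightarrow> (\<forall>i''\<in>{1..m}. even (card {kk\<in>K. i'' \<in> Bs kk} + (if i'' \<in> Z then 1 else 0) + (if i'' = i then 1 else 0)))"

lemma valid_from_sets2:
  fixes Bs :: "(nat \<times> nat) set \<Rightarrow> nat \<Rightarrow> nat set"
  assumes Y: "\<forall>W\<in>P. part_Y W \<subseteq> {1..m}"
    and B: "\<forall>W\<in>P. \<forall>kk < part_b A W. Bs W kk \<subseteq> part_Y W"
    and D: "\<forall>W\<in>P. \<forall>(i, j)\<in>W. \<exists>K Z. finite K \<and> K \<subseteq> {..<part_b A W} \<and> Z \<subseteq> A i j \<and> Z \<subseteq> {1..m}
              \<and> i \<in> {1..m} \<and> par_ok m (Bs W) K Z i"
    and W: "W \<in> P" and p: "(i, j) \<in> W"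
  shows "\<exists>\<psi> :: (nat \<Rightarrow> nat) \<Rightarrow> (nat \<Rightarrow> nat) \<Rightarrow> nat.
        \<forall>x :: nat \<Rightarrow> nat. (\<forall>i'. x i' \<in> carrier gf2) \<longrightarrow>
          \<psi> (\<lambda>kk. if kk < part_b A W
                   then finsum gf2 (\<lambda>i'. ind (Bs W kk) i' \<otimes>\<^bsub>gf2\<^esub> x i') {1..m} else \<zero>\<^bsub>gf2\<^esub>)
            (\<lambda>i'. if i' \<in> A i j then x i' else \<zero>\<^bsub>gf2\<^esub>) = x i"
proof -
  obtain K Z where KZ: "finite K" "K \<subseteq> {..<part_b A W}" "Z \<subseteq> A i j" "Z \<subseteq> {1..m}" "i \<in> {1..m}"
      "par_ok m (Bs W) K Z i"
    using D W p by fastforce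
  define \<psi> where "\<psi> = (\<lambda>(cw::nat \<Rightarrow> nat) (si::nat \<Rightarrow> nat). ((\<Sum>kk\<in>K. cw kk) + (\<Sum>i'\<in>Z. si i')) mod 2)"
  have "\<forall>x :: nat \<Rightarrow> nat. (\<forall>i'. x i' \<in> carrier gf2) \<longrightarrow>
          \<psi> (\<lambda>kk. if kk < part_b A W
                   then finsum gf2 (\<lambda>i'. ind (Bs W kk) i' \<otimes>\<^bsub>gf2\<^esub> x i') {1..m} else \<zero>\<^bsub>gf2\<^esub>)
            (\<lambda>i'. if i' \<in> A i j then x i' else \<zero>\<^bsub>gf2\<^esub>) = x i"
  proof (intro allI impI)
    fix x :: "nat \<Rightarrow> nat" assume x: "\<forall>i'. x i' \<in> carrier gf2"
    then have x01: "\<forall>i'. x i' \<in> {0, 1}" by simp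
    have BsK: "\<forall>kk\<in>K. Bs W kk \<subseteq> {1..m}" using KZ(2) B Y W by blast
    have e1: "(\<Sum>kk\<in>K. (if kk < part_b A W
                   then finsum gf2 (\<lambda>i'. ind (Bs W kk) i' \<otimes>\<^bsub>gf2\<^esub> x i') {1..m} else \<zero>\<^bsub>gf2\<^esub>))
        = (\<Sum>kk\<in>K. (\<Sum>i'\<in>Bs W kk. x i') mod 2)"
    proof (rule sum.cong[OF refl])
      fix kk assume "kk \<in> K"
      then show "(if kk < part_b A W
                   then finsum gf2 (\<lambda>i'. ind (Bs W kk) i' \<otimes>\<^bsub>gf2\<^esub> x i') {1..m} else \<zero>\<^bsub>gf2\<^esub>)
          = (\<Sum>i'\<in>Bs W kk. x i') mod 2"
        using KZ(2) combo_gf2[of "Bs W kk" m x] BsK x01 by auto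
    qed
    have e2: "(\<Sum>i'\<in>Z. (if i' \<in> A i j then x i' else \<zero>\<^bsub>gf2\<^esub>)) = (\<Sum>i'\<in>Z. x i')"
      by (rule sum.cong[OF refl]) (use KZ(3) in auto)
    show "\<psi> (\<lambda>kk. if kk < part_b A W
                   then finsum gf2 (\<lambda>i'. ind (Bs W kk) i' \<otimes>\<^bsub>gf2\<^esub> x i') {1..m} else \<zero>\<^bsub>gf2\<^esub>)
            (\<lambda>i'. if i' \<in> A i j then x i' else \<zero>\<^bsub>gf2\<^esub>) = x i"
      unfolding \<psi>_def using e1 e2 parity_dec[OF x01 KZ(1) KZ(4) BsK KZ(5)] KZ(6)
      by (simp add: par_ok_def)
  qed
  then show ?thesis by blast
qed


lemma valid_from_sets:
  fixes Bs :: "(nat \<times> nat) set \<Rightarrow> nat \<Rightarrow> nat set"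
  assumes Y: "\<forall>W\<in>P. part_Y W \<subseteq> {1..m}"
    and B: "\<forall>W\<in>P. \<forall>kk < part_b A W. Bs W kk \<subseteq> part_Y W"
    and D: "\<forall>W\<in>P. \<forall>(i, j)\<in>W. \<exists>K Z. finite K \<and> K \<subseteq> {..<part_b A W} \<and> Z \<subseteq> A i j \<and> Z \<subseteq> {1..m}
              \<and> i \<in> {1..m} \<and> par_ok m (Bs W) K Z i"
  shows "valid_choice gf2 m A P (\<lambda>W kk. ind (Bs W kk))"
  unfolding valid_choice_def
proof (intro conjI ballI allI impI; clarify?)
  fix W kk i assume W: "W \<in> P" and kk: "kk < part_b A W"
  show "ind (Bs W kk) i \<in> carrier gf2" by (simp add: ind_def)
  show "i \<notin> part_Y W \<Longrightarrow> ind (Bs W kk) i = \<zero>\<^bsub>gf2\<^esub>" using B W kk by (auto simp: ind_def)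
next
  fix W i j assume "W \<in> P" "(i, j) \<in> W"
  then show "\<exists>\<psi> :: (nat \<Rightarrow> nat) \<Rightarrow> (nat \<Rightarrow> nat) \<Rightarrow> nat.
        \<forall>x :: nat \<Rightarrow> nat. (\<forall>i'. x i' \<in> carrier gf2) \<longrightarrow>
          \<psi> (\<lambda>kk. if kk < part_b A W
                   then finsum gf2 (\<lambda>i'. ind (Bs W kk) i' \<otimes>\<^bsub>gf2\<^esub> x i') {1..m} else \<zero>\<^bsub>gf2\<^esub>)
            (\<lambda>i'. if i' \<in> A i j then x i' else \<zero>\<^bsub>gf2\<^esub>) = x i"
    by (rule valid_from_sets2[OF Y B D])
qed



lemma zero_not_indep: assumes "lin_indep_vecs gf2 m T" shows "(\<lambda>i. 0) \<notin> T"
proof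
  assume z: "(\<lambda>i. 0) \<in> T"
  define c where "c = (\<lambda>v::nat \<Rightarrow> nat. if v = (\<lambda>i. 0) then 1 else 0 :: nat)"
  have fT: "finite T" using assms by (simp add: lin_indep_vecs_def)
  have "\<forall>i\<in>{1..m}. finsum gf2 (\<lambda>v. c v \<otimes>\<^bsub>gf2\<^esub> v i) T = \<zero>\<^bsub>gf2\<^esub>"
  proof
    fix i
    have h: "\<And>v. c v * v i = 0" by (auto simp: c_def)
    have "finsum gf2 (\<lambda>v. c v \<otimes>\<^bsub>gf2\<^esub> v i) T = finsum gf2 (\<lambda>v. 0) T"
      by (simp only: gf2_simps h)
    also have "\<dots> = (\<Sum>v\<in>T. 0) mod 2" using fT by (intro gf2_finsum) auto
    finally show "finsum gf2 (\<lambda>v. c v \<otimes>\<^bsub>gf2\<^esub> v i) T = \<zero>\<^bsub>gf2\<^esub>" by simp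
  qed
  moreover have "\<forall>v\<in>T. c v \<in> carrier gf2" by (simp add: c_def)
  ultimately have "\<forall>v\<in>T. c v = \<zero>\<^bsub>gf2\<^esub>" using assms unfolding lin_indep_vecs_def by blast
  then show False using z by (auto simp: c_def)
qed

lemma m_ge: assumes "2 \<le> k" shows "2 * k - 3 \<le> k2_m k"
proof -
  obtain j where j: "k = j + 2" using assms by (metis add.commute le_iff_add)
  have "k * (k - 1) = (j + 2) * (j + 1)" using j by simp
  also have "\<dots> = j * j + 3 * j + 2" by (simp add: algebra_simps)
  finally have "k * (k - 1) = j * j + 3 * j + 2" .
  moreover have "j \<le> j * j" by (cases j) auto
  ultimately have "2 * (2 * k - 3) \<le> k * (k - 1)" using j by linarith
  then show ?thesis unfolding k2_m_def by linarith
qed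

lemma users_ne: assumes "2 \<le> k" shows "(1, 1) \<in> gic_users (k2_m k) k2_nU"
  using m_ge[OF assms] assms by (simp add: users_mem)

lemma partY_U: assumes "2 \<le> k" shows "part_Y (gic_users (k2_m k) k2_nU) = {1..k2_m k}"
  unfolding part_Y_def by (auto simp: users_mem)

lemma partc_le: assumes "finite W" "(i, j) \<in> W"
  shows "part_c A W \<le> card (A i j \<inter> part_Y W)"
  unfolding part_c_def
proof (rule Min_le)
  have "{card (A i j \<inter> part_Y W) |i j. (i, j) \<in> W} = (\<lambda>(i, j). card (A i j \<inter> part_Y W)) ` W"
    by auto
  then show "finite {card (A i j \<inter> part_Y W) |i j. (i, j) \<in> W}" using assms by simp
  show "card (A i j \<inter> part_Y W) \<in> {card (A i j \<inter> part_Y W) |i j. (i, j) \<in> W}" using assms by blast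
qed

lemma b_U: assumes k: "2 \<le> k" shows "k - 1 \<le> part_b (k2_A k) (gic_users (k2_m k) k2_nU)"
proof -
  define U where "U = gic_users (k2_m k) k2_nU"
  define i1 where "i1 = idx k 1 2"
  have i1s: "i1 \<in> star k 1" unfolding i1_def using star1(1)[OF k] k by auto
  have i1m: "i1 \<in> {1..k2_m k}" using i1s star_sub by blast
  have u: "(i1, 1) \<in> U" using i1m by (simp add: U_def users_mem)
  have A: "k2_A k i1 1 = star k 1 - {i1}"
    using A_eq(1)[OF i1m, of 1] pr_idx(1)[of 1 2 k] k by (simp add: vtx_def i1_def Pairs_def)
  have "part_c (k2_A k) U \<le> card (k2_A k i1 1 \<inter> part_Y U)"
    using partc_le[OF _ u] finite_users[of k] U_def by simp
  also have "k2_A k i1 1 \<inter> part_Y U = star k 1 - {i1}"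
    using A partY_U[OF k] star_sub[of k 1] U_def by auto
  also have "card (star k 1 - {i1}) = k - 2" using star1(2)[OF k] i1s by simp
  finally have "part_c (k2_A k) U \<le> k - 2" .
  moreover have "card (part_Y U) = k2_m k" using partY_U[OF k] U_def by simp
  ultimately show ?thesis using m_ge[OF k] unfolding part_b_def U_def[symmetric] by linarith
qed

definition Bs1 :: "nat \<Rightarrow> (nat \<times> nat) set \<Rightarrow> nat \<Rightarrow> nat set" where
  "Bs1 k W kk = (if kk < k - 1 then star k (Suc kk) else {})"

lemma card_low: assumes k: "2 \<le> k" and im: "i'' \<in> {1..k2_m k}"
  shows "card {kk\<in>{..<k - 1}. i'' \<in> Bs1 k W kk} + (if i'' \<in> star k k then 1 else 0) = 2"
proof -
  have L: "1 \<le> lo k i''" "lo k i'' < hi k i''" "hi k i'' \<le> k" using lohi[OF im] by auto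
  have mem: "i'' \<in> star k v \<longleftrightarrow> lo k i'' = v \<or> hi k i'' = v" for v using im by (simp add: star_def)
  show ?thesis
  proof (cases "hi k i'' = k")
    case True
    have "{kk\<in>{..<k - 1}. i'' \<in> Bs1 k W kk} = {lo k i'' - 1}"
      using L True by (auto simp: Bs1_def mem)
    then show ?thesis using True mem by simp
  next
    case False
    have "{kk\<in>{..<k - 1}. i'' \<in> Bs1 k W kk} = {lo k i'' - 1, hi k i'' - 1}"
      using L False by (auto simp: Bs1_def mem)
    moreover have "lo k i'' - 1 \<noteq> hi k i'' - 1" using L by simp
    moreover have "\<not> i'' \<in> star k k" using mem L False by auto
    ultimately show ?thesis by simp
  qed
qed

lemma valid_U: assumes k: "2 \<le> k"
  shows "valid_choice gf2 (k2_m k) (k2_A k) {gic_users (k2_m k) k2_nU} (\<lambda>W kk. ind (Bs1 k W kk))"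
proof (rule valid_from_sets)
  let ?U = "gic_users (k2_m k) k2_nU"
  show "\<forall>W\<in>{?U}. part_Y W \<subseteq> {1..k2_m k}" using partY_U[OF k] by simp
  show "\<forall>W\<in>{?U}. \<forall>kk < part_b (k2_A k) W. Bs1 k W kk \<subseteq> part_Y W"
    by (auto simp: Bs1_def partY_U[OF k] star_def)
  show "\<forall>W\<in>{?U}. \<forall>(i, j)\<in>W. \<exists>K Z. finite K \<and> K \<subseteq> {..<part_b (k2_A k) W} \<and> Z \<subseteq> k2_A k i j
     \<and> Z \<subseteq> {1..k2_m k} \<and> i \<in> {1..k2_m k} \<and> par_ok (k2_m k) (Bs1 k W) K Z i"
  proof (intro ballI, clarify)
    fix i j assume u: "(i, j) \<in> ?U"
    have im: "i \<in> {1..k2_m k}" and j: "j \<in> {1, 2}" using u by (auto simp: users_mem)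
    define v where "v = vtx k i j"
    have v: "v \<in> {1..k}" and A: "k2_A k i j = star k v - {i}" using A_eq[OF im j] v_def by auto
    have iv: "i \<in> star k v" using vtx_star[OF im] v_def by simp
    have bU: "k - 1 \<le> part_b (k2_A k) ?U" by (rule b_U[OF k])
    define Z where "Z = star k v - {i}"
    have Z1: "Z \<subseteq> k2_A k i j" using A by (simp add: Z_def)
    have Z2: "Z \<subseteq> {1..k2_m k}" unfolding Z_def using star_sub[of k v] by blast
    note Z = Z1 Z2
    show "\<exists>K Z. finite K \<and> K \<subseteq> {..<part_b (k2_A k) ?U} \<and> Z \<subseteq> k2_A k i j
     \<and> Z \<subseteq> {1..k2_m k} \<and> i \<in> {1..k2_m k} \<and> par_ok (k2_m k) (Bs1 k ?U) K Z i"
    proof (cases "v < k")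
      case True
      have "par_ok (k2_m k) (Bs1 k ?U) {v - 1} Z i"
        unfolding par_ok_def
      proof
        fix i'' assume "i'' \<in> {1..k2_m k}"
        have "{kk \<in> {v - 1}. i'' \<in> Bs1 k ?U kk} = (if i'' \<in> star k v then {v - 1} else {})"
          using True v by (auto simp: Bs1_def)
        then show "even (card {kk \<in> {v - 1}. i'' \<in> Bs1 k ?U kk} + (if i'' \<in> Z then 1 else 0) + (if i'' = i then 1 else 0))"
          using iv by (auto simp: Z_def)
      qed
      moreover have "{v - 1} \<subseteq> {..<part_b (k2_A k) ?U}" using True v bU by auto
      ultimately show ?thesis using Z im by (intro exI[of _ "{v - 1}"] exI[of _ Z]) simp
    next
      case False
      then have vk: "v = k" using v by simp
      have "par_ok (k2_m k) (Bs1 k ?U) {..<k - 1} Z i"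
        unfolding par_ok_def
      proof
        fix i'' assume i'': "i'' \<in> {1..k2_m k}"
        have c: "card {kk\<in>{..<k - 1}. i'' \<in> Bs1 k ?U kk} + (if i'' \<in> star k k then 1 else 0) = 2"
          by (rule card_low[OF k i''])
        show "even (card {kk \<in> {..<k - 1}. i'' \<in> Bs1 k ?U kk} + (if i'' \<in> Z then 1 else 0) + (if i'' = i then 1 else 0))"
        proof (cases "i'' \<in> star k k")
          case True then show ?thesis using c iv vk by (auto simp: Z_def)
        next
          case False then show ?thesis using c iv vk by (auto simp: Z_def)
        qed
      qed
      moreover have "{..<k - 1} \<subseteq> {..<part_b (k2_A k) ?U}" using bU by auto
      ultimately show ?thesis using Z im by (intro exI[of _ "{..<k - 1}"] exI[of _ Z]) simp
    qed
  qed
qed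

lemma rank_U: assumes k: "2 \<le> k"
  shows "vec_rank gf2 (k2_m k) (choice_rows (k2_A k) {gic_users (k2_m k) k2_nU} (\<lambda>W kk. ind (Bs1 k W kk))) \<le> k - 1"
proof -
  let ?U = "gic_users (k2_m k) k2_nU"
  define S where "S = choice_rows (k2_A k) {?U} (\<lambda>W kk. ind (Bs1 k W kk))"
  define G where "G = (\<lambda>kk. ind (star k (Suc kk))) ` {..<k - 1}"
  have SG: "S \<subseteq> insert (\<lambda>i. 0) G"
  proof
    fix v assume "v \<in> S"
    then obtain kk where v: "v = ind (Bs1 k ?U kk)" unfolding S_def choice_rows_def by auto
    show "v \<in> insert (\<lambda>i. 0) G"
    proof (cases "kk < k - 1")
      case True then show ?thesis using v by (auto simp: G_def Bs1_def)
    next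
      case False then show ?thesis using v by (auto simp: Bs1_def ind_def)
    qed
  qed
  have finS: "finite S" using SG finite_subset by (auto simp: G_def)
  have cardG: "card G \<le> k - 1" unfolding G_def using card_image_le[of "{..<k - 1}"] by simp
  define C where "C = {card T | T. T \<subseteq> S \<and> lin_indep_vecs gf2 (k2_m k) T}"
  have "C \<subseteq> card ` Pow S" unfolding C_def by auto
  then have finC: "finite C" using finS finite_subset by blast
  have "0 \<in> C" unfolding C_def lin_indep_vecs_def by (auto intro!: exI[of _ "{}"])
  then have neC: "C \<noteq> {}" by blast
  have "Max C \<le> k - 1"
  proof (rule Max.boundedI[OF finC neC])
    fix a assume "a \<in> C"
    then obtain T where T: "a = card T" "T \<subseteq> S" "lin_indep_vecs gf2 (k2_m k) T" unfolding C_def by blast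
    have "T \<subseteq> G" using T(2,3) SG zero_not_indep by blast
    then have "card T \<le> card G" by (rule card_mono[rotated]) (simp add: G_def)
    then show "a \<le> k - 1" using T(1) cardG by simp
  qed
  then show ?thesis unfolding vec_rank_def S_def[symmetric] C_def[symmetric] .
qed



definition en :: "'a set \<Rightarrow> nat \<Rightarrow> 'a" where
  "en S = (SOME h. bij_betw h {0..<card S} S)"

lemma en_bij: assumes "finite S" shows "bij_betw (en S) {0..<card S} S"
  unfolding en_def using ex_bij_betw_nat_finite[OF assms] by (rule someI_ex)

lemma en_in: "finite S \<Longrightarrow> kk < card S \<Longrightarrow> en S kk \<in> S"
  using en_bij bij_betwE by fastforce

lemma en_surj: "finite S \<Longrightarrow> e \<in> S \<Longrightarrow> \<exists>kk < card S. en S kk = e"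
  using en_bij[of S] unfolding bij_betw_def by (metis atLeastLessThan_iff imageE)

lemma en_inj: "finite S \<Longrightarrow> kk < card S \<Longrightarrow> kk' < card S \<Longrightarrow> en S kk = en S kk' \<Longrightarrow> kk = kk'"
  using en_bij[of S] unfolding bij_betw_def inj_on_def by auto

definition grp_ok :: "nat \<Rightarrow> (nat \<times> nat) set \<Rightarrow> (nat \<Rightarrow> nat set) \<Rightarrow> bool" where
  "grp_ok k W Bs \<longleftrightarrow> (\<forall>kk < part_b (k2_A k) W. Bs kk \<subseteq> part_Y W) \<and>
     (\<forall>(i, j)\<in>W. \<exists>K Z. finite K \<and> K \<subseteq> {..<part_b (k2_A k) W} \<and> Z \<subseteq> k2_A k i j \<and> Z \<subseteq> {1..k2_m k}
              \<and> i \<in> {1..k2_m k} \<and> par_ok (k2_m k) Bs K Z i)"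

lemma grp_facts:
  assumes W: "W \<subseteq> gic_users (k2_m k) k2_nU" "W \<noteq> {}"
  shows "finite W" "part_Y W \<subseteq> {1..k2_m k}" "finite (part_Y W)"
    "\<And>i j. (i, j) \<in> W \<Longrightarrow> i \<in> part_Y W"
    "\<And>i j. (i, j) \<in> W \<Longrightarrow> part_c (k2_A k) W \<le> card (k2_A k i j \<inter> part_Y W)"
    "part_c (k2_A k) W \<le> card (part_Y W)"
    "part_b (k2_A k) W = card (part_Y W) - part_c (k2_A k) W"
proof -
  show fW: "finite W" using W finite_users[of k] finite_subset by blast
  show Ym: "part_Y W \<subseteq> {1..k2_m k}" using W unfolding part_Y_def by (auto simp: users_mem)
  show fY: "finite (part_Y W)" using Ym finite_subset by blast
  show "\<And>i j. (i, j) \<in> W \<Longrightarrow> i \<in> part_Y W" unfolding part_Y_def by blast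
  show cle: "\<And>i j. (i, j) \<in> W \<Longrightarrow> part_c (k2_A k) W \<le> card (k2_A k i j \<inter> part_Y W)"
    using partc_le[OF fW] by blast
  obtain i j where "(i, j) \<in> W" using W by auto
  then have "part_c (k2_A k) W \<le> card (k2_A k i j \<inter> part_Y W)" by (rule cle)
  also have "\<dots> \<le> card (part_Y W)" using fY by (intro card_mono) auto
  finally show "part_c (k2_A k) W \<le> card (part_Y W)" .
  show "part_b (k2_A k) W = card (part_Y W) - part_c (k2_A k) W" by (simp add: part_b_def)
qed

lemma grp_ok0:
  assumes W: "W \<subseteq> gic_users (k2_m k) k2_nU" "W \<noteq> {}" and c: "part_c (k2_A k) W = 0"
  shows "\<exists>Bs. grp_ok k W Bs"
proof -
  define Y where "Y = part_Y W"
  note F = grp_facts[OF W, folded Y_def]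
  have b: "part_b (k2_A k) W = card Y" using F(7) c by simp
  define Bs where "Bs = (\<lambda>kk. if kk < card Y then {en Y kk} else {})"
  have "grp_ok k W Bs"
    unfolding grp_ok_def
  proof (intro conjI allI impI ballI)
    fix kk assume "kk < part_b (k2_A k) W"
    then show "Bs kk \<subseteq> part_Y W" using en_in[OF F(3)] b by (auto simp: Bs_def Y_def)
  next
    fix p assume p: "p \<in> W"
    obtain i j where ij: "p = (i, j)" by (cases p)
    have iY: "i \<in> Y" using F(4) p ij by blast
    have im: "i \<in> {1..k2_m k}" using iY F(2) by blast
    obtain ki where ki: "ki < card Y" "en Y ki = i" using en_surj[OF F(3) iY] by blast
    have "par_ok (k2_m k) Bs {ki} {} i"
      unfolding par_ok_def
    proof
      fix i'' assume "i'' \<in> {1..k2_m k}"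
      have "{kk \<in> {ki}. i'' \<in> Bs kk} = (if i'' = i then {ki} else {})" using ki by (auto simp: Bs_def)
      then show "even (card {kk \<in> {ki}. i'' \<in> Bs kk} + (if i'' \<in> {} then 1 else 0) + (if i'' = i then 1 else 0))"
        by simp
    qed
    then have "\<exists>K Z. finite K \<and> K \<subseteq> {..<part_b (k2_A k) W} \<and> Z \<subseteq> k2_A k i j \<and> Z \<subseteq> {1..k2_m k}
              \<and> i \<in> {1..k2_m k} \<and> par_ok (k2_m k) Bs K Z i"
      using ki b im by (intro exI[of _ "{ki}"] exI[of _ "{}"]) simp
    then show "case p of (i, j) \<Rightarrow> \<exists>K Z. finite K \<and> K \<subseteq> {..<part_b (k2_A k) W} \<and> Z \<subseteq> k2_A k i j \<and> Z \<subseteq> {1..k2_m k}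
              \<and> i \<in> {1..k2_m k} \<and> par_ok (k2_m k) Bs K Z i" using ij by simp
  qed
  then show ?thesis by blast
qed

lemma arith3: assumes "3 \<le> (p::nat)" "2 \<le> c" "p * (c + 1) \<le> 2 * y" shows "p + c \<le> y"
proof -
  obtain p' where p: "p = p' + 3" using assms(1) by (metis add.commute le_iff_add)
  obtain c' where c: "c = c' + 2" using assms(2) by (metis add.commute le_iff_add)
  have "p * (c + 1) = p' * c' + 3 * p' + 3 * c' + 9" unfolding p c by (simp add: algebra_simps)
  then show ?thesis using assms(3) p c by linarith
qed

lemma star_inter: assumes "u \<noteq> w" shows "card (star k u \<inter> star k w) \<le> 1"
proof -
  have "\<forall>x\<in>star k u \<inter> star k w. \<forall>y\<in>star k u \<inter> star k w. x = y"
  proof (intro ballI)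
    fix x y assume x: "x \<in> star k u \<inter> star k w" and y: "y \<in> star k u \<inter> star k w"
    have xm: "x \<in> {1..k2_m k}" and ym: "y \<in> {1..k2_m k}" using x y by (auto simp: star_def)
    have lx: "lo k x < hi k x" and ly: "lo k y < hi k y" using lohi[OF xm] lohi[OF ym] by auto
    have "(lo k x = u \<or> hi k x = u) \<and> (lo k x = w \<or> hi k x = w)" using x by (auto simp: star_def)
    moreover have "(lo k y = u \<or> hi k y = u) \<and> (lo k y = w \<or> hi k y = w)" using y by (auto simp: star_def)
    ultimately have "lo k x = lo k y \<and> hi k x = hi k y" using lx ly assms by auto
    then show "x = y" using lohi_inj[OF xm ym] by simp
  qed
  then show ?thesis by (simp add: card_le_Suc0_iff_eq)
qed

lemma handshake:
  assumes "finite Y" "Y \<subseteq> {1..k2_m k}" "finite V"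
  shows "(\<Sum>v\<in>V. card (Y \<inter> star k v)) \<le> 2 * card Y"
proof -
  have "(\<Sum>v\<in>V. card (Y \<inter> star k v)) = (\<Sum>v\<in>V. \<Sum>i\<in>Y. if i \<in> star k v then 1 else 0)"
  proof (rule sum.cong[OF refl])
    fix v
    have "card (Y \<inter> star k v) = card {i \<in> Y. i \<in> star k v}" by (simp add: Int_def)
    also have "\<dots> = (\<Sum>i\<in>{i \<in> Y. i \<in> star k v}. 1)" by simp
    also have "\<dots> = (\<Sum>i\<in>Y. if i \<in> star k v then 1 else 0)" using assms(1) by (rule sum.inter_filter)
    finally show "card (Y \<inter> star k v) = (\<Sum>i\<in>Y. if i \<in> star k v then 1 else 0)" .
  qed
  also have "\<dots> = (\<Sum>i\<in>Y. \<Sum>v\<in>V. if i \<in> star k v then 1 else 0)" by (rule sum.swap)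
  also have "\<dots> \<le> (\<Sum>i\<in>Y. 2)"
  proof (rule sum_mono)
    fix i assume i: "i \<in> Y"
    then have im: "i \<in> {1..k2_m k}" using assms(2) by blast
    have "(\<Sum>v\<in>V. if i \<in> star k v then 1 else 0) = card {v \<in> V. i \<in> star k v}"
      using assms(3) by (simp add: sum.inter_filter[symmetric])
    also have "\<dots> \<le> card {lo k i, hi k i}"
      by (rule card_mono) (auto simp: star_def)
    also have "\<dots> \<le> 2" by (simp add: card_insert_if)
    finally show "(\<Sum>v\<in>V. if i \<in> star k v then 1 else 0) \<le> (2::nat)" .
  qed
  also have "\<dots> = 2 * card Y" by simp
  finally show ?thesis .
qed

lemma grp_ok2:
  assumes W: "W \<subseteq> gic_users (k2_m k) k2_nU" "W \<noteq> {}" and c: "2 \<le> part_c (k2_A k) W"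
  shows "\<exists>Bs. grp_ok k W Bs"
proof -
  define Y where "Y = part_Y W"
  define c where "c = part_c (k2_A k) W"
  note F = grp_facts[OF W, folded Y_def c_def]
  have b: "part_b (k2_A k) W = card Y - c" using F(7) by simp
  define V where "V = (\<lambda>(i, j). vtx k i j) ` W"
  have fV: "finite V" using F(1) V_def by simp
  have Wu: "\<And>i j. (i, j) \<in> W \<Longrightarrow> i \<in> {1..k2_m k} \<and> j \<in> {1, 2}" using W(1) by (auto simp: users_mem)
  have dv: "c + 1 \<le> card (Y \<inter> star k v)" if v: "v \<in> V" for v
  proof -
    obtain i j where ij: "(i, j) \<in> W" "v = vtx k i j" using v V_def by auto
    have im: "i \<in> {1..k2_m k}" and j: "j \<in> {1, 2}" using Wu[OF ij(1)] by auto
    have A: "k2_A k i j = star k v - {i}" using A_eq(1)[OF im j] ij(2) by simp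
    have iY: "i \<in> Y \<inter> star k v" using F(4)[OF ij(1)] vtx_star[OF im] ij(2) by simp
    have "c \<le> card (k2_A k i j \<inter> Y)" using F(5)[OF ij(1)] .
    also have "k2_A k i j \<inter> Y = (Y \<inter> star k v) - {i}" using A by auto
    also have "card ((Y \<inter> star k v) - {i}) = card (Y \<inter> star k v) - 1" using iY F(3) by simp
    finally show ?thesis using iY F(3) card_gt_0_iff[of "Y \<inter> star k v"] by fastforce
  qed
  have pV: "card V \<le> card Y - c"
  proof -
    have V1: "1 \<le> card V" using fV W(2) V_def by (simp add: Suc_le_eq card_gt_0_iff)
    have hs: "(\<Sum>v\<in>V. card (Y \<inter> star k v)) \<le> 2 * card Y" by (rule handshake[OF F(3) F(2) fV])
    have lb: "card V * (c + 1) \<le> (\<Sum>v\<in>V. card (Y \<inter> star k v))"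
      using sum_bounded_below[of V "c + 1" "\<lambda>v. card (Y \<inter> star k v)"] dv by simp
    show ?thesis
    proof (cases "card V \<ge> 3")
      case True
      have "card V * (c + 1) \<le> 2 * card Y" using hs lb by linarith
      then have "card V + c \<le> card Y" using arith3[OF True c[folded c_def]] by blast
      then show ?thesis by linarith
    next
      case False
      then consider "card V = 1" | "card V = 2" using V1 by linarith
      then show ?thesis
      proof cases
        case 1
        then obtain v where "V = {v}" using card_1_singletonE by blast
        then have "c + 1 \<le> card (Y \<inter> star k v)" using dv by simp
        also have "\<dots> \<le> card Y" using F(3) by (intro card_mono) auto
        finally show ?thesis using 1 by linarith
      next
        case 2
        then obtain u w where uw: "V = {u, w}" "u \<noteq> w" by (meson card_2_iff)
        have "card (Y \<inter> star k u) + card (Y \<inter> star k w) = card ((Y \<inter> star k u) \<union> (Y \<inter> star k w)) + card ((Y \<inter> star k u) \<inter> (Y \<inter> star k w))"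
          using F(3) by (intro card_Un_Int) auto
        moreover have "card ((Y \<inter> star k u) \<union> (Y \<inter> star k w)) \<le> card Y" using F(3) by (intro card_mono) auto
        moreover have "card ((Y \<inter> star k u) \<inter> (Y \<inter> star k w)) \<le> card (star k u \<inter> star k w)"
          by (intro card_mono) auto
        moreover have "card (star k u \<inter> star k w) \<le> 1" by (rule star_inter[OF uw(2)])
        moreover have "c + 1 \<le> card (Y \<inter> star k u)" "c + 1 \<le> card (Y \<inter> star k w)" using dv uw by auto
        ultimately show ?thesis using 2 c c_def by linarith
      qed
    qed
  qed
  define Bs where "Bs = (\<lambda>kk. if kk < card V then Y \<inter> star k (en V kk) else {})"
  have "grp_ok k W Bs"
    unfolding grp_ok_def
  proof (intro conjI allI impI ballI)
    fix kk assume "kk < part_b (k2_A k) W"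
    then show "Bs kk \<subseteq> part_Y W" by (auto simp: Bs_def Y_def)
  next
    fix p assume p: "p \<in> W"
    obtain i j where ij: "p = (i, j)" by (cases p)
    have ijW: "(i, j) \<in> W" using p ij by simp
    have im: "i \<in> {1..k2_m k}" and j: "j \<in> {1, 2}" using Wu[OF ijW] by auto
    define v where "v = vtx k i j"
    have vV: "v \<in> V" using ijW v_def V_def by force
    have A: "k2_A k i j = star k v - {i}" using A_eq(1)[OF im j] v_def by simp
    have iY: "i \<in> Y \<inter> star k v" using F(4)[OF ijW] vtx_star[OF im] v_def by simp
    obtain kv where kv: "kv < card V" "en V kv = v" using en_surj[OF fV vV] by blast
    define Z where "Z = (Y \<inter> star k v) - {i}"
    have Z1: "Z \<subseteq> k2_A k i j" using A by (auto simp: Z_def)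
    have Z2: "Z \<subseteq> {1..k2_m k}" using F(2) by (auto simp: Z_def Y_def)
    have "par_ok (k2_m k) Bs {kv} Z i"
      unfolding par_ok_def
    proof
      fix i'' assume "i'' \<in> {1..k2_m k}"
      have "{kk \<in> {kv}. i'' \<in> Bs kk} = (if i'' \<in> Y \<inter> star k v then {kv} else {})"
        using kv by (auto simp: Bs_def)
      then show "even (card {kk \<in> {kv}. i'' \<in> Bs kk} + (if i'' \<in> Z then 1 else 0) + (if i'' = i then 1 else 0))"
        using iY by (auto simp: Z_def)
    qed
    moreover have "{kv} \<subseteq> {..<part_b (k2_A k) W}" using kv pV b by auto
    ultimately have "\<exists>K Z. finite K \<and> K \<subseteq> {..<part_b (k2_A k) W} \<and> Z \<subseteq> k2_A k i j \<and> Z \<subseteq> {1..k2_m k}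
              \<and> i \<in> {1..k2_m k} \<and> par_ok (k2_m k) Bs K Z i"
      using Z1 Z2 im by (intro exI[of _ "{kv}"] exI[of _ Z]) simp
    then show "case p of (i, j) \<Rightarrow> \<exists>K Z. finite K \<and> K \<subseteq> {..<part_b (k2_A k) W} \<and> Z \<subseteq> k2_A k i j \<and> Z \<subseteq> {1..k2_m k}
              \<and> i \<in> {1..k2_m k} \<and> par_ok (k2_m k) Bs K Z i" using ij by simp
  qed
  then show ?thesis by blast
qed



lemma grp_ok1:
  assumes W: "W \<subseteq> gic_users (k2_m k) k2_nU" "W \<noteq> {}" and c: "part_c (k2_A k) W = 1"
  shows "\<exists>Bs. grp_ok k W Bs"
proof -
  define Y where "Y = part_Y W"
  note F = grp_facts[OF W, folded Y_def]
  have b: "part_b (k2_A k) W = card Y - 1" using F(7) c by simp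
  have Y1: "1 \<le> card Y" using F(6) c by simp
  define e0 where "e0 = en Y 0"
  have e0Y: "e0 \<in> Y" using en_in[OF F(3)] Y1 e0_def by simp
  define ix where "ix = (\<lambda>e. inv_into {0..<card Y} (en Y) e)"
  have ix: "ix e < card Y" "en Y (ix e) = e" if "e \<in> Y" for e
  proof -
    have bij: "bij_betw (en Y) {0..<card Y} Y" by (rule en_bij[OF F(3)])
    then have "ix e \<in> {0..<card Y}" unfolding ix_def using that
      by (metis bij_betw_def inv_into_into)
    then show "ix e < card Y" by simp
    show "en Y (ix e) = e" unfolding ix_def using bij that
      by (metis bij_betw_def f_inv_into_f)
  qed
  have ix0: "ix e \<noteq> 0" if "e \<in> Y" "e \<noteq> e0" for e
    using ix(2)[OF that(1)] that(2) e0_def by metis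
  define \<rho> where "\<rho> = (\<lambda>e. ix e - 1)"
  define Bs where "Bs = (\<lambda>kk. if kk < card Y - 1 then {en Y (Suc kk), e0} else {})"
  have rho: "\<rho> e < card Y - 1" "Bs (\<rho> e) = {e, e0}" if "e \<in> Y" "e \<noteq> e0" for e
  proof -
    show "\<rho> e < card Y - 1" using ix[OF that(1)] ix0[OF that] \<rho>_def by simp
    then show "Bs (\<rho> e) = {e, e0}" using ix[OF that(1)] ix0[OF that] \<rho>_def Bs_def
      by (simp add: Suc_pred)
  qed
  have rho_inj: "\<rho> e = \<rho> e' \<Longrightarrow> e = e'" if "e \<in> Y" "e \<noteq> e0" "e' \<in> Y" "e' \<noteq> e0" for e e'
  proof -
    assume "\<rho> e = \<rho> e'"
    then have "ix e = ix e'" using ix0[OF that(1,2)] ix0[OF that(3,4)] \<rho>_def by simp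
    then show "e = e'" using ix(2)[OF that(1)] ix(2)[OF that(3)] by metis
  qed
  have "grp_ok k W Bs"
    unfolding grp_ok_def
  proof (intro conjI allI impI ballI)
    fix kk assume "kk < part_b (k2_A k) W"
    then show "Bs kk \<subseteq> part_Y W" using en_in[OF F(3)] e0Y b by (auto simp: Bs_def Y_def)
  next
    fix p assume p: "p \<in> W"
    obtain i j where ij: "p = (i, j)" by (cases p)
    have ijW: "(i, j) \<in> W" using p ij by simp
    have im: "i \<in> {1..k2_m k}" and j: "j \<in> {1, 2}" using ijW W(1) by (auto simp: users_mem)
    have A: "k2_A k i j = star k (vtx k i j) - {i}" using A_eq(1)[OF im j] .
    have iY: "i \<in> Y" using F(4)[OF ijW] .
    have "1 \<le> card (k2_A k i j \<inter> Y)" using F(5)[OF ijW] c by simp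
    then obtain i' where i': "i' \<in> k2_A k i j" "i' \<in> Y" by (metis card.empty disjoint_iff not_one_le_zero)
    have ii': "i' \<noteq> i" using i' A by auto
    have i'm: "i' \<in> {1..k2_m k}" using i'(2) F(2) by blast
    define E where "E = {i, i'} - {e0}"
    have EY: "\<And>e. e \<in> E \<Longrightarrow> e \<in> Y \<and> e \<noteq> e0" using iY i' E_def by auto
    have finE: "finite E" by (simp add: E_def)
    have par: "par_ok (k2_m k) Bs (\<rho> ` E) {i'} i"
      unfolding par_ok_def
    proof
      fix i'' assume "i'' \<in> {1..k2_m k}"
      have s: "{kk \<in> \<rho> ` E. i'' \<in> Bs kk} = \<rho> ` {e \<in> E. i'' \<in> {e, e0}}"
        using rho(2) EY by auto
      have injr: "inj_on \<rho> {e \<in> E. i'' \<in> {e, e0}}"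
        using rho_inj EY by (auto simp: inj_on_def)
      have cE: "card {kk \<in> \<rho> ` E. i'' \<in> Bs kk} = card {e \<in> E. i'' \<in> {e, e0}}"
        unfolding s using card_image[OF injr] .
      show "even (card {kk \<in> \<rho> ` E. i'' \<in> Bs kk} + (if i'' \<in> {i'} then 1 else 0) + (if i'' = i then 1 else 0))"
      proof (cases "i'' = e0")
        case True
        then have "{e \<in> E. i'' \<in> {e, e0}} = E" by auto
        moreover have "card E + (if e0 = i' then 1 else 0) + (if e0 = i then 1 else 0) = 2"
          using ii' by (cases "e0 = i"; cases "e0 = i'") (auto simp: E_def card_insert_if)
        ultimately show ?thesis using cE True by simp
      next
        case False
        then have "{e \<in> E. i'' \<in> {e, e0}} = (if i'' \<in> {i, i'} then {i''} else {})"
          by (auto simp: E_def)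
        then show ?thesis using cE ii' by auto
      qed
    qed
    have Ksub: "\<rho> ` E \<subseteq> {..<part_b (k2_A k) W}" using rho(1) EY b by auto
    have "\<exists>K Z. finite K \<and> K \<subseteq> {..<part_b (k2_A k) W} \<and> Z \<subseteq> k2_A k i j \<and> Z \<subseteq> {1..k2_m k}
              \<and> i \<in> {1..k2_m k} \<and> par_ok (k2_m k) Bs K Z i"
      using finE Ksub i'(1) i'm im par by (intro exI[of _ "\<rho> ` E"] exI[of _ "{i'}"]) simp
    then show "case p of (i, j) \<Rightarrow> \<exists>K Z. finite K \<and> K \<subseteq> {..<part_b (k2_A k) W} \<and> Z \<subseteq> k2_A k i j \<and> Z \<subseteq> {1..k2_m k}
              \<and> i \<in> {1..k2_m k} \<and> par_ok (k2_m k) Bs K Z i" using ij by simp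
  qed
  then show ?thesis by blast
qed



lemma grp_ok_any:
  assumes W: "W \<subseteq> gic_users (k2_m k) k2_nU" "W \<noteq> {}"
  shows "\<exists>Bs. grp_ok k W Bs"
proof (cases "part_c (k2_A k) W = 0")
  case True then show ?thesis using grp_ok0[OF W] by blast
next
  case False
  show ?thesis
  proof (cases "part_c (k2_A k) W = 1")
    case True then show ?thesis using grp_ok1[OF W] by blast
  next
    case False
    then have "2 \<le> part_c (k2_A k) W" using \<open>part_c (k2_A k) W \<noteq> 0\<close> by linarith
    then show ?thesis using grp_ok2[OF W] by blast
  qed
qed

lemma valid_any:
  assumes P: "partition_on (gic_users (k2_m k) k2_nU) P"
  shows "\<exists>\<alpha>. valid_choice gf2 (k2_m k) (k2_A k) P \<alpha>"
proof -
  have WP: "W \<subseteq> gic_users (k2_m k) k2_nU \<and> W \<noteq> {}" if "W \<in> P" for W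
    using P that unfolding partition_on_def by blast
  define BB where "BB = (\<lambda>W. SOME Bs. grp_ok k W Bs)"
  have ok: "grp_ok k W (BB W)" if "W \<in> P" for W
    unfolding BB_def using grp_ok_any[of W k] WP[OF that] by (metis someI_ex)
  have "valid_choice gf2 (k2_m k) (k2_A k) P (\<lambda>W kk. ind (BB W kk))"
  proof (rule valid_from_sets)
    show "\<forall>W\<in>P. part_Y W \<subseteq> {1..k2_m k}" using WP grp_facts(2) by blast
    show "\<forall>W\<in>P. \<forall>kk < part_b (k2_A k) W. BB W kk \<subseteq> part_Y W"
    proof
      fix W assume "W \<in> P"
      from ok[OF this] show "\<forall>kk < part_b (k2_A k) W. BB W kk \<subseteq> part_Y W" unfolding grp_ok_def by (rule conjunct1)
    qed
    show "\<forall>W\<in>P. \<forall>(i, j)\<in>W. \<exists>K Z. finite K \<and> K \<subseteq> {..<part_b (k2_A k) W} \<and> Z \<subseteq> k2_A k i j \<and> Z \<subseteq> {1..k2_m k}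
              \<and> i \<in> {1..k2_m k} \<and> par_ok (k2_m k) (BB W) K Z i"
    proof
      fix W assume "W \<in> P"
      from ok[OF this] show "\<forall>(i, j)\<in>W. \<exists>K Z. finite K \<and> K \<subseteq> {..<part_b (k2_A k) W} \<and> Z \<subseteq> k2_A k i j \<and> Z \<subseteq> {1..k2_m k}
              \<and> i \<in> {1..k2_m k} \<and> par_ok (k2_m k) (BB W) K Z i" unfolding grp_ok_def by (rule conjunct2)
    qed
  qed
  then show ?thesis by (rule exI[where x="\<lambda>W kk. ind (BB W kk)"])
qed

lemma rate_ge:
  assumes k: "2 \<le> k" and P: "partition_on (gic_users (k2_m k) k2_nU) P"
  shows "k - 1 \<le> iupm_rate (k2_m k) (k2_A k) P"
  unfolding iupm_rate_def
proof (rule cInf_greatest)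
  obtain \<alpha> where a: "valid_choice gf2 (k2_m k) (k2_A k) P \<alpha>" using valid_any[OF P] by blast
  then show "{vec_rank R (k2_m k) (choice_rows (k2_A k) P \<alpha>) | (R :: nat ring) s \<alpha>.
      field R \<and> 1 \<le> s \<and> card (carrier R) = 2 ^ s \<and> valid_choice R (k2_m k) (k2_A k) P \<alpha>} \<noteq> {}"
    using gf2_field gf2_card by blast
next
  fix x assume "x \<in> {vec_rank R (k2_m k) (choice_rows (k2_A k) P \<alpha>) | (R :: nat ring) s \<alpha>.
      field R \<and> 1 \<le> s \<and> card (carrier R) = 2 ^ s \<and> valid_choice R (k2_m k) (k2_A k) P \<alpha>}"
  then obtain R :: "nat ring" and s \<alpha> where x: "x = vec_rank R (k2_m k) (choice_rows (k2_A k) P \<alpha>)"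
    "field R" "card (carrier R) = 2 ^ s" "valid_choice R (k2_m k) (k2_A k) P \<alpha>" by blast
  then show "k - 1 \<le> x" using iupm_lb[OF k P x(2) x(3) x(4)] by simp
qed

lemma rate_U:
  assumes k: "2 \<le> k"
  shows "iupm_rate (k2_m k) (k2_A k) {gic_users (k2_m k) k2_nU} = k - 1"
proof (rule antisym)
  let ?U = "gic_users (k2_m k) k2_nU"
  have PU: "partition_on ?U {?U}" using users_ne[OF k] by (intro partition_on_space) auto
  show "k - 1 \<le> iupm_rate (k2_m k) (k2_A k) {?U}" by (rule rate_ge[OF k PU])
  have "vec_rank gf2 (k2_m k) (choice_rows (k2_A k) {?U} (\<lambda>W kk. ind (Bs1 k W kk)))
     \<in> {vec_rank R (k2_m k) (choice_rows (k2_A k) {?U} \<alpha>) | (R :: nat ring) s \<alpha>.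
      field R \<and> 1 \<le> s \<and> card (carrier R) = 2 ^ s \<and> valid_choice R (k2_m k) (k2_A k) {?U} \<alpha>}"
    using gf2_field gf2_card valid_U[OF k] by blast
  then have "iupm_rate (k2_m k) (k2_A k) {?U} \<le> vec_rank gf2 (k2_m k) (choice_rows (k2_A k) {?U} (\<lambda>W kk. ind (Bs1 k W kk)))"
    unfolding iupm_rate_def by (rule cInf_lower) simp
  then show "iupm_rate (k2_m k) (k2_A k) {?U} \<le> k - 1" using rank_U[OF k] by simp
qed

lemma beta_iupm_val: assumes k: "2 \<le> k" shows "beta_iupm (k2_m k) k2_nU (k2_A k) = k - 1"
  unfolding beta_iupm_def
proof (rule cInf_eq_minimum)
  let ?U = "gic_users (k2_m k) k2_nU"
  have PU: "partition_on ?U {?U}" using users_ne[OF k] by (intro partition_on_space) auto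
  have "card {?U} \<le> k2_m k" using m_ge[OF k] k by simp
  then show "k - 1 \<in> {iupm_rate (k2_m k) (k2_A k) P | P. partition_on ?U P \<and> card P \<le> k2_m k}"
    using PU rate_U[OF k] by (metis (mono_tags, lifting) mem_Collect_eq)
next
  fix x assume "x \<in> {iupm_rate (k2_m k) (k2_A k) P | P. partition_on (gic_users (k2_m k) k2_nU) P \<and> card P \<le> k2_m k}"
  then obtain P where "x = iupm_rate (k2_m k) (k2_A k) P" "partition_on (gic_users (k2_m k) k2_nU) P" by blast
  then show "k - 1 \<le> x" using rate_ge[OF k] by simp
qed

theorem proposition4:
  fixes k :: nat
  assumes "2 \<le> k"
  shows "real (beta_iupm (k2_m k) k2_nU (k2_A k)) = gic_beta (k2_m k) k2_nU (k2_A k)"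
  using beta_iupm_val[OF assms] gic_beta_val[OF assms] by simp


end
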